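(* Let $\mathcal H\subseteq\mathrm{Hol}(\mathbb B_d,\mathbb C^n)$ be a reproducing kernel Hilbert space in which the $\mathbb C^n$-valued polynomials are dense, and suppose $\langle\boldsymbol z^\alpha\otimes\boldsymbol\xi,\boldsymbol z^\beta\otimes\boldsymbol\eta\rangle=0$ for all $\alpha\ne\beta$ in $\mathbb Z_+^d$ and all $\boldsymbol\xi,\boldsymbol\eta\in\mathbb C^n$. If the $d$-tuple $\boldsymbol M$ of multiplication by the coordinate functions on $\mathcal H$ is $\mathcal U(d)$-homogeneous, then there is a sequence $\{A_\ell\}_{\ell\in\mathbb Z_+}$ of positive definite $n\times n$ matrices such that $$\|\boldsymbol z^\alpha\otimes\boldsymbol\xi\|^2=\alpha!\,\langle A_{|\alpha|}\boldsymbol\xi,\boldsymbol\xi\rangle,\qquad\alpha\in\mathbb Z_+^d,\ \boldsymbol\xi\in\mathbb C^n.$$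
   Context: $\mathbb B_d$ is the unit ball of $\mathbb C^d$, $\boldsymbol z^\alpha\otimes\boldsymbol\xi$ denotes the function $\boldsymbol z\mapsto\boldsymbol z^\alpha\boldsymbol\xi$, $\alpha!=\alpha_1!\cdots\alpha_d!$, $|\alpha|=\alpha_1+\cdots+\alpha_d$. The (bounded, commuting) tuple $\boldsymbol M=(M_{z_1},\ldots,M_{z_d})$ is $\mathcal U(d)$-homogeneous if for every $u=(u_{jk})\in\mathcal U(d)$ there is a unitary $\Gamma(u)$ on $\mathcal H$ with $M_{z_j}\Gamma(u)=\Gamma(u)\sum_{k}u_{jk}M_{z_k}$ for $j=1,\ldots,d$. *)

theory Defs
  imports "HOL-Analysis.Analysis"
begin

type_synonym ('d, 'n) vfun = "complex ^ 'd \<Rightarrow> complex ^ 'n"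

definition ballB :: "(complex ^ 'd) set" where
  "ballB = ball 0 1"

definition hol_ball :: "('d::finite, 'n::finite) vfun \<Rightarrow> bool" where
  "hol_ball f \<longleftrightarrow> (\<forall>z\<in>ballB. \<exists>L. (f has_derivative L) (at z) \<and>
      (\<forall>c x. L (c *s x) = c *s L x))"

text \<open>Elements of Hol(B_d,C^n) are represented extensionally: zero off the ball.\<close>
definition restrB :: "('d::finite, 'n::finite) vfun \<Rightarrow> ('d, 'n) vfun" where
  "restrB f = (\<lambda>z. if z \<in> ballB then f z else 0)"

definition vadd :: "('d::finite, 'n::finite) vfun \<Rightarrow> ('d, 'n) vfun \<Rightarrow> ('d, 'n) vfun" where
  "vadd f g = (\<lambda>z. f z + g z)"

definition vsub :: "('d::finite, 'n::finite) vfun \<Rightarrow> ('d, 'n) vfun \<Rightarrow> ('d, 'n) vfun" where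
  "vsub f g = (\<lambda>z. f z - g z)"

definition vscale :: "complex \<Rightarrow> ('d::finite, 'n::finite) vfun \<Rightarrow> ('d, 'n) vfun" where
  "vscale c f = (\<lambda>z. c *s f z)"

definition monomial_vec :: "('d::finite \<Rightarrow> nat) \<Rightarrow> complex ^ 'n::finite \<Rightarrow> ('d, 'n) vfun" where
  "monomial_vec \<alpha> \<xi> = restrB (\<lambda>z. (\<Prod>i\<in>UNIV. (z $ i) ^ (\<alpha> i)) *s \<xi>)"

definition mi_fact :: "('d::finite \<Rightarrow> nat) \<Rightarrow> nat" where
  "mi_fact \<alpha> = (\<Prod>i\<in>UNIV. fact (\<alpha> i))"

definition mi_abs :: "('d::finite \<Rightarrow> nat) \<Rightarrow> nat" where
  "mi_abs \<alpha> = (\<Sum>i\<in>UNIV. \<alpha> i)"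

definition Mz :: "'d::finite \<Rightarrow> ('d, 'n::finite) vfun \<Rightarrow> ('d, 'n) vfun" where
  "Mz j f = (\<lambda>z. (z $ j) *s f z)"

definition hnorm :: "(('d, 'n) vfun \<Rightarrow> ('d, 'n) vfun \<Rightarrow> complex) \<Rightarrow> ('d::finite, 'n::finite) vfun \<Rightarrow> real" where
  "hnorm ip f = sqrt (Re (ip f f))"

definition hilbert_hol :: "('d::finite, 'n::finite) vfun set \<Rightarrow> (('d, 'n) vfun \<Rightarrow> ('d, 'n) vfun \<Rightarrow> complex) \<Rightarrow> bool" where
  "hilbert_hol H ip \<longleftrightarrow>
     (\<forall>f\<in>H. hol_ball f \<and> (\<forall>z. z \<notin> ballB \<longrightarrow> f z = 0)) \<and>
     (\<lambda>z. 0) \<in> H \<and>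
     (\<forall>f\<in>H. \<forall>g\<in>H. vadd f g \<in> H) \<and>
     (\<forall>c. \<forall>f\<in>H. vscale c f \<in> H) \<and>
     (\<forall>f\<in>H. \<forall>g\<in>H. \<forall>h\<in>H. ip (vadd f g) h = ip f h + ip g h) \<and>
     (\<forall>c. \<forall>f\<in>H. \<forall>g\<in>H. ip (vscale c f) g = c * ip f g) \<and>
     (\<forall>f\<in>H. \<forall>g\<in>H. ip g f = cnj (ip f g)) \<and>
     (\<forall>f\<in>H. Im (ip f f) = 0 \<and> Re (ip f f) \<ge> 0) \<and>
     (\<forall>f\<in>H. ip f f = 0 \<longrightarrow> f = (\<lambda>z. 0)) \<and>
     (\<forall>X. (\<forall>k. X k \<in> H) \<and>
          (\<forall>e>0. \<exists>N. \<forall>m\<ge>N. \<forall>k\<ge>N. hnorm ip (vsub (X m) (X k)) < e) \<longrightarrow>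
          (\<exists>f\<in>H. (\<lambda>k. hnorm ip (vsub (X k) f)) \<longlonglongrightarrow> 0))"

definition rkhs_hol :: "('d::finite, 'n::finite) vfun set \<Rightarrow> (('d, 'n) vfun \<Rightarrow> ('d, 'n) vfun \<Rightarrow> complex) \<Rightarrow> bool" where
  "rkhs_hol H ip \<longleftrightarrow> hilbert_hol H ip \<and>
     (\<forall>z\<in>ballB. \<exists>C. \<forall>f\<in>H. norm (f z) \<le> C * hnorm ip f)"

definition polys_dense :: "('d::finite, 'n::finite) vfun set \<Rightarrow> (('d, 'n) vfun \<Rightarrow> ('d, 'n) vfun \<Rightarrow> complex) \<Rightarrow> bool" where
  "polys_dense H ip \<longleftrightarrow>
     (\<forall>\<alpha> \<xi>. monomial_vec \<alpha> \<xi> \<in> H) \<and>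
     (\<forall>f\<in>H. \<forall>e>0. \<exists>A c. finite A \<and>
        hnorm ip (vsub f (\<lambda>z. \<Sum>\<alpha>\<in>A. monomial_vec \<alpha> (c \<alpha>) z)) < e)"

definition mult_bounded :: "('d::finite, 'n::finite) vfun set \<Rightarrow> (('d, 'n) vfun \<Rightarrow> ('d, 'n) vfun \<Rightarrow> complex) \<Rightarrow> bool" where
  "mult_bounded H ip \<longleftrightarrow>
     (\<forall>j. (\<forall>f\<in>H. Mz j f \<in> H) \<and> (\<exists>C. \<forall>f\<in>H. hnorm ip (Mz j f) \<le> C * hnorm ip f))"

definition unitary_mat :: "complex ^ 'd ^ 'd \<Rightarrow> bool" where
  "unitary_mat u \<longleftrightarrow>
     (\<forall>i k. (\<Sum>j\<in>UNIV. u $ i $ j * cnj (u $ k $ j)) = (if i = k then 1 else 0))"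

definition unitary_op :: "('d::finite, 'n::finite) vfun set \<Rightarrow> (('d, 'n) vfun \<Rightarrow> ('d, 'n) vfun \<Rightarrow> complex) \<Rightarrow> (('d, 'n) vfun \<Rightarrow> ('d, 'n) vfun) \<Rightarrow> bool" where
  "unitary_op H ip G \<longleftrightarrow> bij_betw G H H \<and>
     (\<forall>f\<in>H. \<forall>g\<in>H. G (vadd f g) = vadd (G f) (G g)) \<and>
     (\<forall>c. \<forall>f\<in>H. G (vscale c f) = vscale c (G f)) \<and>
     (\<forall>f\<in>H. \<forall>g\<in>H. ip (G f) (G g) = ip f g)"

definition Ud_homogeneous :: "('d::finite, 'n::finite) vfun set \<Rightarrow> (('d, 'n) vfun \<Rightarrow> ('d, 'n) vfun \<Rightarrow> complex) \<Rightarrow> bool" where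
  "Ud_homogeneous H ip \<longleftrightarrow>
     (\<forall>u. unitary_mat u \<longrightarrow> (\<exists>G. unitary_op H ip G \<and>
        (\<forall>j. \<forall>f\<in>H. Mz j (G f) = G (\<lambda>z. \<Sum>k\<in>UNIV. u $ j $ k *s Mz k f z))))"

definition cinner :: "complex ^ 'n::finite \<Rightarrow> complex ^ 'n \<Rightarrow> complex" where
  "cinner x y = (\<Sum>i\<in>UNIV. x $ i * cnj (y $ i))"

definition posdef_mat :: "complex ^ 'n ^ 'n::finite \<Rightarrow> bool" where
  "posdef_mat A \<longleftrightarrow> (\<forall>i j. A $ i $ j = cnj (A $ j $ i)) \<and>
     (\<forall>\<xi>. \<xi> \<noteq> 0 \<longrightarrow> Im (cinner (A *v \<xi>) \<xi>) = 0 \<and> Re (cinner (A *v \<xi>) \<xi>) > 0)"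

end

theory Submission
  imports Defs
begin


locale hilb =
  fixes H :: "(complex ^ 'd::finite \<Rightarrow> complex ^ 'n::finite) set"
    and ip :: "(complex ^ 'd \<Rightarrow> complex ^ 'n) \<Rightarrow> (complex ^ 'd \<Rightarrow> complex ^ 'n) \<Rightarrow> complex"
  assumes hh: "hilbert_hol H ip"
begin

lemma zero_in: "(\<lambda>z. 0) \<in> H" using hh unfolding hilbert_hol_def by blast
lemma vadd_in: "f \<in> H \<Longrightarrow> g \<in> H \<Longrightarrow> vadd f g \<in> H" using hh unfolding hilbert_hol_def by blast
lemma vscale_in: "f \<in> H \<Longrightarrow> vscale c f \<in> H" using hh unfolding hilbert_hol_def by blast
lemma ip_add1: "f \<in> H \<Longrightarrow> g \<in> H \<Longrightarrow> h \<in> H \<Longrightarrow> ip (vadd f g) h = ip f h + ip g h"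
  using hh unfolding hilbert_hol_def by blast
lemma ip_scale1: "f \<in> H \<Longrightarrow> g \<in> H \<Longrightarrow> ip (vscale c f) g = c * ip f g"
  using hh unfolding hilbert_hol_def by blast
lemma ip_cnj: "f \<in> H \<Longrightarrow> g \<in> H \<Longrightarrow> ip g f = cnj (ip f g)"
  using hh unfolding hilbert_hol_def by blast
lemma ip_Im: "f \<in> H \<Longrightarrow> Im (ip f f) = 0" using hh unfolding hilbert_hol_def by blast
lemma ip_Re: "f \<in> H \<Longrightarrow> Re (ip f f) \<ge> 0" using hh unfolding hilbert_hol_def by blast
lemma ip_def0: "f \<in> H \<Longrightarrow> ip f f = 0 \<Longrightarrow> f = (\<lambda>z. 0)" using hh unfolding hilbert_hol_def by blast

lemma vsub_eq: "vsub f g = vadd f (vscale (-1) g)"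
  unfolding vsub_def vadd_def vscale_def by (rule ext) (simp add: vec_eq_iff)

lemma vsub_in: "f \<in> H \<Longrightarrow> g \<in> H \<Longrightarrow> vsub f g \<in> H"
  by (simp add: vsub_eq vadd_in vscale_in)

lemma ip_add2: "f \<in> H \<Longrightarrow> g \<in> H \<Longrightarrow> h \<in> H \<Longrightarrow> ip f (vadd g h) = ip f g + ip f h"
  by (subst ip_cnj, simp_all add: vadd_in ip_add1) (metis ip_cnj complex_cnj_cnj)

lemma ip_scale2: "f \<in> H \<Longrightarrow> g \<in> H \<Longrightarrow> ip f (vscale c g) = cnj c * ip f g"
  by (subst ip_cnj, simp_all add: vscale_in ip_scale1) (metis ip_cnj complex_cnj_cnj)

lemma ip_sub1: "f \<in> H \<Longrightarrow> g \<in> H \<Longrightarrow> h \<in> H \<Longrightarrow> ip (vsub f g) h = ip f h - ip g h"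
  by (simp add: vsub_eq ip_add1 vscale_in ip_scale1)

lemma ip_sub2: "f \<in> H \<Longrightarrow> g \<in> H \<Longrightarrow> h \<in> H \<Longrightarrow> ip f (vsub g h) = ip f g - ip f h"
  by (simp add: vsub_eq ip_add2 vscale_in ip_scale2)

lemma ip_zero1: "g \<in> H \<Longrightarrow> ip (\<lambda>z. 0) g = 0"
proof -
  assume g: "g \<in> H"
  have "(\<lambda>z. 0) = vscale 0 g" unfolding vscale_def by simp
  then show ?thesis using ip_scale1[OF g g, of 0] by simp
qed

lemma ip_zero2: "g \<in> H \<Longrightarrow> ip g (\<lambda>z. 0) = 0"
  using ip_cnj[OF zero_in, of g] ip_zero1 by simp

lemma sum_in: "finite A \<Longrightarrow> (\<And>a. a \<in> A \<Longrightarrow> f a \<in> H) \<Longrightarrow> (\<lambda>z. \<Sum>a\<in>A. f a z) \<in> H"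
proof (induction A rule: finite_induct)
  case empty then show ?case using zero_in by simp
next
  case (insert x F)
  have "(\<lambda>z. \<Sum>a\<in>insert x F. f a z) = vadd (f x) (\<lambda>z. \<Sum>a\<in>F. f a z)"
    using insert by (simp add: vadd_def)
  then show ?case using insert vadd_in by simp
qed

lemma ip_sum1: "finite A \<Longrightarrow> (\<And>a. a \<in> A \<Longrightarrow> f a \<in> H) \<Longrightarrow> g \<in> H \<Longrightarrow>
   ip (\<lambda>z. \<Sum>a\<in>A. f a z) g = (\<Sum>a\<in>A. ip (f a) g)"
proof (induction A rule: finite_induct)
  case empty then show ?case using ip_zero1 by simp
next
  case (insert x F)
  have "(\<lambda>z. \<Sum>a\<in>insert x F. f a z) = vadd (f x) (\<lambda>z. \<Sum>a\<in>F. f a z)"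
    using insert by (simp add: vadd_def)
  moreover have sF: "(\<lambda>z. \<Sum>a\<in>F. f a z) \<in> H" by (rule sum_in) (use insert in auto)
  moreover have fx: "f x \<in> H" using insert by auto
  moreover have "ip (\<lambda>z. \<Sum>a\<in>F. f a z) g = (\<Sum>a\<in>F. ip (f a) g)"
    by (rule insert.IH) (use insert in auto)
  ultimately show ?case using insert.hyps ip_add1[OF fx sF insert.prems(2)] by simp
qed

lemma ip_sum2: "finite A \<Longrightarrow> (\<And>a. a \<in> A \<Longrightarrow> f a \<in> H) \<Longrightarrow> g \<in> H \<Longrightarrow>
   ip g (\<lambda>z. \<Sum>a\<in>A. f a z) = (\<Sum>a\<in>A. ip g (f a))"
proof -
  assume a: "finite A" "\<And>a. a \<in> A \<Longrightarrow> f a \<in> H" "g \<in> H"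
  have "ip g (\<lambda>z. \<Sum>a\<in>A. f a z) = cnj (ip (\<lambda>z. \<Sum>a\<in>A. f a z) g)"
    by (rule ip_cnj[OF sum_in[OF a(1,2)] a(3)])
  also have "\<dots> = (\<Sum>a\<in>A. cnj (ip (f a) g))" by (simp add: ip_sum1[OF a])
  also have "\<dots> = (\<Sum>a\<in>A. ip g (f a))" using a by (intro sum.cong refl) (simp add: ip_cnj[OF a(3)])
  finally show ?thesis .
qed

lemma ip_self_real: "f \<in> H \<Longrightarrow> ip f f = complex_of_real ((hnorm ip f)^2)"
  unfolding hnorm_def using ip_Re ip_Im by (simp add: complex_eq_iff)

lemma cs: assumes f: "f \<in> H" and g: "g \<in> H"
  shows "norm (ip f g) \<le> hnorm ip f * hnorm ip g"
proof (cases "ip g g = 0")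
  case True
  then have "g = (\<lambda>z. 0)" using ip_def0 g by blast
  then have "ip f g = 0" using ip_zero2 f by simp
  then show ?thesis unfolding hnorm_def using ip_Re[OF f] ip_Re[OF g] by simp
next
  case False
  define a where "a = Re (ip g g)"
  have ga: "ip g g = of_real a" using ip_Im[OF g] a_def by (simp add: complex_eq_iff)
  have apos: "a > 0" using False ga ip_Re[OF g] a_def by (metis less_eq_real_def of_real_0)
  define p where "p = ip f g"
  define t where "t = - p / of_real a"
  define h where "h = vadd f (vscale t g)"
  have hH: "h \<in> H" unfolding h_def using f g vadd_in vscale_in by blast
  have tg: "vscale t g \<in> H" using g vscale_in by blast
  have "ip h h = ip f f + ip f (vscale t g) + (ip (vscale t g) f + ip (vscale t g) (vscale t g))"
    unfolding h_def using f tg by (simp add: ip_add1 ip_add2 vadd_in)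
  also have "\<dots> = ip f f + cnj t * p + t * cnj p + t * cnj t * of_real a"
    using f g tg by (simp add: ip_scale1 ip_scale2 p_def ga ip_cnj[OF f g])
  also have "cnj t * p = - (p * cnj p) / of_real a"
    unfolding t_def by simp
  also have "t * cnj p = - (p * cnj p) / of_real a"
    unfolding t_def by simp
  also have "t * cnj t * of_real a = (p * cnj p) / of_real a"
    unfolding t_def using apos by (simp add: field_simps power2_eq_square)
  finally have "ip h h = ip f f - (p * cnj p) / of_real a" by simp
  also have "p * cnj p = of_real ((cmod p)^2)" by (rule complex_norm_square[symmetric])
  finally have "ip h h = ip f f - of_real ((cmod p)^2 / a)" by simp
  then have "Re (ip f f) - (cmod p)^2 / a \<ge> 0" using ip_Re[OF hH] by simp
  then have "(cmod p)^2 \<le> Re (ip f f) * a" using apos by (simp add: field_simps)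
  then have "sqrt ((cmod p)^2) \<le> sqrt (Re (ip f f) * a)" by (rule real_sqrt_le_mono)
  then show ?thesis unfolding hnorm_def p_def a_def by (simp add: real_sqrt_mult)
qed

end


lemma small_zero: fixes x :: complex assumes "\<And>e. e > 0 \<Longrightarrow> norm x \<le> e" shows "x = 0"
proof (rule ccontr)
  assume "x \<noteq> 0" then have "norm x > 0" by simp
  then have "norm x \<le> norm x / 2" using assms[of "norm x / 2"] by simp
  with \<open>norm x > 0\<close> show False by simp
qed

lemma prod_upd: "(\<Prod>i\<in>UNIV. (z $ i) ^ ((\<alpha>(j := Suc (\<alpha> j))) i)) = z $ j * (\<Prod>i\<in>UNIV. (z $ i) ^ (\<alpha> i))"
  for z :: "complex ^ 'd::finite"
proof -
  have "(\<Prod>i\<in>UNIV. (z $ i) ^ ((\<alpha>(j := Suc (\<alpha> j))) i)) = z $ j ^ Suc (\<alpha> j) * (\<Prod>i\<in>UNIV - {j}. (z $ i) ^ ((\<alpha>(j := Suc (\<alpha> j))) i))"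
    by (subst prod.remove[of UNIV j]) auto
  also have "(\<Prod>i\<in>UNIV - {j}. (z $ i) ^ ((\<alpha>(j := Suc (\<alpha> j))) i)) = (\<Prod>i\<in>UNIV - {j}. (z $ i) ^ (\<alpha> i))"
    by (intro prod.cong) auto
  also have "(\<Prod>i\<in>UNIV. (z $ i) ^ (\<alpha> i)) = z $ j ^ \<alpha> j * (\<Prod>i\<in>UNIV - {j}. (z $ i) ^ (\<alpha> i))"
    by (subst prod.remove[of UNIV j]) auto
  ultimately show ?thesis by simp
qed

lemma Mz_mon: "Mz j (monomial_vec \<alpha> x) = monomial_vec (\<alpha>(j := Suc (\<alpha> j))) x"
  unfolding Mz_def monomial_vec_def restrB_def
  by (rule ext) (simp add: prod_upd vec_eq_iff del: fun_upd_apply)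

lemma prod_zero_pt: "(\<Prod>i\<in>UNIV. ((0::complex^'d::finite) $ i) ^ (\<alpha> i)) = (if \<alpha> = (\<lambda>_. 0) then 1 else 0)"
proof (cases "\<alpha> = (\<lambda>_. 0)")
  case True then show ?thesis by simp
next
  case False
  then obtain j where "\<alpha> j \<noteq> 0" by auto
  then have "(0::complex) ^ (\<alpha> j) = 0" by simp
  then have "(\<Prod>i\<in>UNIV. ((0::complex^'d) $ i) ^ (\<alpha> i)) = 0"
    using \<open>(0::complex) ^ (\<alpha> j) = 0\<close> by (intro prod_zero) auto
  then show ?thesis using False by simp
qed

lemma zero_ball: "(0::complex^'d::finite) \<in> ballB" unfolding ballB_def by simp

lemma mon_at0: "monomial_vec \<alpha> x (0::complex^'d::finite) = (if \<alpha> = (\<lambda>_. 0) then x else 0)"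
  unfolding monomial_vec_def restrB_def using zero_ball by (auto simp: prod_zero_pt fun_eq_iff)

lemma mon0_eq: "monomial_vec (\<lambda>_. 0) x = restrB (\<lambda>z. x)"
  unfolding monomial_vec_def by simp

lemma mon_scale: "monomial_vec \<alpha> (c *s x) = vscale c (monomial_vec \<alpha> x)"
  unfolding monomial_vec_def restrB_def vscale_def by (rule ext) (simp add: vec_eq_iff)

lemma mon_sub: "monomial_vec \<alpha> (x - y) = vsub (monomial_vec \<alpha> x) (monomial_vec \<alpha> y)"
  unfolding monomial_vec_def restrB_def vsub_def by (rule ext) (simp add: vec_eq_iff algebra_simps)

lemma mon_zero: "monomial_vec \<alpha> 0 = (\<lambda>z. 0)"
  unfolding monomial_vec_def restrB_def by (rule ext) (simp add: vec_eq_iff)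

lemma smult_sum: "(c::complex) *s (\<Sum>a\<in>A. f a) = (\<Sum>a\<in>A. c *s f a)"
  by (simp add: vec_eq_iff sum_component sum_distrib_left)

lemma Mz_sub: "Mz j (vsub f g) = vsub (Mz j f) (Mz j g)"
  unfolding Mz_def vsub_def by (rule ext) (simp add: vec_eq_iff algebra_simps)

definition polyf :: "(('d::finite) \<Rightarrow> nat) set \<Rightarrow> (('d \<Rightarrow> nat) \<Rightarrow> complex ^ 'n::finite) \<Rightarrow> ('d, 'n) vfun" where
  "polyf A c = (\<lambda>z. \<Sum>\<alpha>\<in>A. monomial_vec \<alpha> (c \<alpha>) z)"

lemma Mz_polyf: "Mz j (polyf A c) = (\<lambda>z. \<Sum>\<alpha>\<in>A. monomial_vec (\<alpha>(j := Suc (\<alpha> j))) (c \<alpha>) z)"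
  unfolding polyf_def Mz_mon[symmetric] by (rule ext) (simp add: Mz_def smult_sum)

lemma polyf_at0: "polyf A c (0::complex^'d::finite) = (if (\<lambda>_. 0) \<in> A then c (\<lambda>_. 0) else 0)" if "finite A"
  unfolding polyf_def mon_at0 using that by (simp add: sum.delta' if_distrib cong: if_cong)

lemma mon_sum_axis: "monomial_vec \<alpha> x = (\<lambda>z. \<Sum>i\<in>UNIV. vscale (x $ i) (monomial_vec \<alpha> (axis i 1)) z)"
proof -
  have "x = (\<Sum>i\<in>UNIV. (x $ i) *s axis i 1)"
    by (simp add: vec_eq_iff sum_component axis_def if_distrib cong: if_cong)
  then have "monomial_vec \<alpha> x = monomial_vec \<alpha> (\<Sum>i\<in>UNIV. (x $ i) *s axis i 1)" by simp
  also have "\<dots> = (\<lambda>z. \<Sum>i\<in>UNIV. vscale (x $ i) (monomial_vec \<alpha> (axis i 1)) z)"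
    unfolding monomial_vec_def restrB_def vscale_def by (rule ext) (simp add: smult_sum vec_eq_iff sum_component algebra_simps sum_distrib_left)
  finally show ?thesis .
qed



lemma nth_le_norm: "cmod ((x::complex^'n::finite) $ i) \<le> norm x"
  unfolding norm_vec_def by (rule member_le_L2_set) simp_all

lemma upd_ne0: "\<alpha>(j := Suc (\<alpha> j)) \<noteq> (\<lambda>_. 0::nat)"
  by (metis fun_upd_same nat.distinct(1))

lemma ne0_dec: assumes "\<alpha> \<noteq> (\<lambda>_. 0::nat)" shows "\<exists>j \<beta>. \<alpha> = \<beta>(j := Suc (\<beta> j))"
proof -
  obtain j where j: "\<alpha> j \<noteq> 0" using assms by auto
  define \<beta> where "\<beta> = \<alpha>(j := \<alpha> j - 1)"
  have "\<alpha> = \<beta>(j := Suc (\<beta> j))" using j unfolding \<beta>_def by (auto simp: fun_eq_iff)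
  then show ?thesis by blast
qed

lemma aux_bound1:
  fixes x \<delta> y C :: real
  assumes "0 \<le> x" "x < \<delta>" "0 \<le> y"
  shows "C * x * y \<le> (\<bar>C\<bar> + 1) * \<delta> * (y + 1)"
proof -
  have "C * x \<le> \<bar>C\<bar> * x" using assms(1) by (simp add: mult_right_mono)
  also have "\<dots> \<le> (\<bar>C\<bar> + 1) * \<delta>" using assms by (intro mult_mono) auto
  finally have a: "C * x \<le> (\<bar>C\<bar> + 1) * \<delta>" .
  have "C * x * y \<le> (\<bar>C\<bar> + 1) * \<delta> * y" using a assms(3) by (rule mult_right_mono)
  also have "\<dots> \<le> (\<bar>C\<bar> + 1) * \<delta> * (y + 1)" using assms by (intro mult_left_mono) auto
  finally show ?thesis .
qed

lemma aux_bound2: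
  fixes x \<delta> a K C0 :: real
  assumes "0 \<le> x" "x < \<delta>" "0 \<le> a" "0 \<le> K"
  shows "x * a + K * (C0 * x) \<le> \<delta> * (a + K * \<bar>C0\<bar>)"
proof -
  have "C0 * x \<le> \<bar>C0\<bar> * x" using assms(1) by (simp add: mult_right_mono)
  also have "\<dots> \<le> \<bar>C0\<bar> * \<delta>" using assms by (intro mult_left_mono) auto
  finally have "K * (C0 * x) \<le> K * (\<bar>C0\<bar> * \<delta>)" using assms(4) by (rule mult_left_mono)
  moreover have "x * a \<le> \<delta> * a" using assms by (intro mult_right_mono) auto
  ultimately show ?thesis by (simp add: algebra_simps)
qed

locale full = hilb H ip for H :: "(complex ^ 'd::finite \<Rightarrow> complex ^ 'n::finite) set" and ip +
  assumes rk: "rkhs_hol H ip" and pd: "polys_dense H ip"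
    and orth: "\<And>\<alpha> \<beta> \<xi> \<eta>. \<alpha> \<noteq> \<beta> \<Longrightarrow> ip (monomial_vec \<alpha> \<xi>) (monomial_vec \<beta> \<eta>) = 0"
    and mb: "mult_bounded H ip"
begin

lemma mon_in: "monomial_vec \<alpha> x \<in> H" using pd unfolding polys_dense_def by blast
lemma dense: "f \<in> H \<Longrightarrow> e > 0 \<Longrightarrow> \<exists>A c. finite A \<and> hnorm ip (vsub f (polyf A c)) < e"
  using pd unfolding polys_dense_def polyf_def by blast
lemma polyf_in: "finite A \<Longrightarrow> polyf A c \<in> H" unfolding polyf_def by (rule sum_in) (auto intro: mon_in)
lemma Mz_in: "f \<in> H \<Longrightarrow> Mz j f \<in> H" using mb unfolding mult_bounded_def by blast
lemma Mz_bd: "\<exists>C. \<forall>f\<in>H. hnorm ip (Mz j f) \<le> C * hnorm ip f" using mb unfolding mult_bounded_def by blast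
lemma eval0: "\<exists>C. \<forall>f\<in>H. norm (f 0) \<le> C * hnorm ip f" using rk zero_ball unfolding rkhs_hol_def by blast
lemma hnorm_nonneg: "f \<in> H \<Longrightarrow> hnorm ip f \<ge> 0" unfolding hnorm_def using ip_Re by simp

lemma const_perp: assumes h: "h \<in> H" shows "ip (Mz j h) (monomial_vec (\<lambda>_. 0) \<xi>) = 0"
proof -
  let ?c = "monomial_vec (\<lambda>_. 0) \<xi>"
  obtain C where C: "\<forall>f\<in>H. hnorm ip (Mz j f) \<le> C * hnorm ip f" using Mz_bd by blast
  have cH: "?c \<in> H" by (rule mon_in)
  show ?thesis
  proof (rule small_zero)
    fix e :: real assume e: "e > 0"
    define \<delta> where "\<delta> = e / ((\<bar>C\<bar> + 1) * (hnorm ip ?c + 1))"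
    have d1: "(\<bar>C\<bar> + 1) * (hnorm ip ?c + 1) > 0" using hnorm_nonneg[OF cH]
      by (intro mult_pos_pos) auto
    have dpos: "\<delta> > 0" using e d1 unfolding \<delta>_def by (rule divide_pos_pos)
    obtain A c where A: "finite A" "hnorm ip (vsub h (polyf A c)) < \<delta>" using dense[OF h dpos] by blast
    let ?p = "polyf A c"
    have pH: "?p \<in> H" using polyf_in A by blast
    have "ip (Mz j ?p) ?c = 0"
      unfolding Mz_polyf using A(1) by (simp add: ip_sum1 mon_in cH orth upd_ne0)
    then have "ip (Mz j h) ?c = ip (Mz j (vsub h ?p)) ?c"
      using \<open>ip (Mz j ?p) ?c = 0\<close> by (simp add: Mz_sub ip_sub1[OF Mz_in[OF h] Mz_in[OF pH] cH])
    then have "norm (ip (Mz j h) ?c) = norm (ip (Mz j (vsub h ?p)) ?c)" by simp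
    also have "\<dots> \<le> hnorm ip (Mz j (vsub h ?p)) * hnorm ip ?c"
      by (rule cs) (use Mz_in vsub_in h pH cH in auto)
    also have "\<dots> \<le> (C * hnorm ip (vsub h ?p)) * hnorm ip ?c"
      by (rule mult_right_mono) (use C vsub_in h pH hnorm_nonneg cH in auto)
    also have "\<dots> \<le> (\<bar>C\<bar> + 1) * \<delta> * (hnorm ip ?c + 1)"
      by (rule aux_bound1) (use A hnorm_nonneg vsub_in h pH cH in auto)
    also have "\<dots> = e" using d1 unfolding \<delta>_def by (metis (no_types) mult.commute mult.left_commute nonzero_eq_divide_eq less_irrefl)
    finally show "norm (ip (Mz j h) ?c) \<le> e" .
  qed
qed

lemma polyf_ip0: assumes "finite A"
  shows "ip (polyf A c) (monomial_vec (\<lambda>_. 0) \<eta>) = ip (monomial_vec (\<lambda>_. 0) (polyf A c 0)) (monomial_vec (\<lambda>_. 0) \<eta>)"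
proof -
  have "ip (polyf A c) (monomial_vec (\<lambda>_. 0) \<eta>) = (\<Sum>\<alpha>\<in>A. ip (monomial_vec \<alpha> (c \<alpha>)) (monomial_vec (\<lambda>_. 0) \<eta>))"
    unfolding polyf_def using assms by (simp add: ip_sum1 mon_in)
  also have "\<dots> = (\<Sum>\<alpha>\<in>A. if \<alpha> = (\<lambda>_. 0) then ip (monomial_vec (\<lambda>_. 0) (c (\<lambda>_. 0))) (monomial_vec (\<lambda>_. 0) \<eta>) else 0)"
    by (intro sum.cong refl) (auto simp: orth)
  also have "\<dots> = ip (monomial_vec (\<lambda>_. 0) (polyf A c 0)) (monomial_vec (\<lambda>_. 0) \<eta>)"
    using assms by (simp add: polyf_at0 mon_zero ip_zero1 mon_in)
  finally show ?thesis .
qed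

lemma lin_bound: "\<exists>K\<ge>0. \<forall>x. norm (ip (monomial_vec (\<lambda>_. 0) x) (monomial_vec (\<lambda>_. 0) \<eta>)) \<le> K * norm x"
proof -
  let ?e = "monomial_vec (\<lambda>_. 0) \<eta>"
  define K where "K = (\<Sum>i\<in>UNIV. norm (ip (monomial_vec (\<lambda>_. 0) (axis i 1)) ?e))"
  have "K \<ge> 0" unfolding K_def by (intro sum_nonneg) auto
  moreover have "norm (ip (monomial_vec (\<lambda>_. 0) x) ?e) \<le> K * norm x" for x
  proof -
    have "ip (monomial_vec (\<lambda>_. 0) x) ?e = (\<Sum>i\<in>UNIV. ip (vscale (x $ i) (monomial_vec (\<lambda>_. 0) (axis i 1))) ?e)"
      by (subst mon_sum_axis) (simp add: ip_sum1 mon_in vscale_in)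
    also have "\<dots> = (\<Sum>i\<in>UNIV. x $ i * ip (monomial_vec (\<lambda>_. 0) (axis i 1)) ?e)"
      by (simp add: ip_scale1 mon_in)
    finally have "norm (ip (monomial_vec (\<lambda>_. 0) x) ?e) \<le> (\<Sum>i\<in>UNIV. norm (x $ i) * norm (ip (monomial_vec (\<lambda>_. 0) (axis i 1)) ?e))"
      by (metis (no_types, lifting) norm_mult norm_sum sum.cong)
    also have "\<dots> \<le> (\<Sum>i\<in>UNIV. norm x * norm (ip (monomial_vec (\<lambda>_. 0) (axis i 1)) ?e))"
      by (intro sum_mono mult_right_mono nth_le_norm norm_ge_zero)
    also have "\<dots> = K * norm x" unfolding K_def by (simp add: sum_distrib_left mult.commute)
    finally show ?thesis .
  qed
  ultimately show ?thesis by blast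
qed

lemma eval_ip: assumes f: "f \<in> H"
  shows "ip f (monomial_vec (\<lambda>_. 0) \<eta>) = ip (monomial_vec (\<lambda>_. 0) (f 0)) (monomial_vec (\<lambda>_. 0) \<eta>)"
proof -
  let ?e = "monomial_vec (\<lambda>_. 0) \<eta>"
  have eH: "?e \<in> H" by (rule mon_in)
  obtain K where K: "K \<ge> 0" "\<And>x. norm (ip (monomial_vec (\<lambda>_. 0) x) ?e) \<le> K * norm x" using lin_bound by blast
  obtain C0 where C0: "\<forall>f\<in>H. norm (f 0) \<le> C0 * hnorm ip f" using eval0 by blast
  have "ip f ?e - ip (monomial_vec (\<lambda>_. 0) (f 0)) ?e = 0"
  proof (rule small_zero)
    fix e :: real assume e: "e > 0"
    define \<delta> where "\<delta> = e / (hnorm ip ?e + K * \<bar>C0\<bar> + 1)"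
    have "K * \<bar>C0\<bar> \<ge> 0" using K by simp
    then have d1: "hnorm ip ?e + K * \<bar>C0\<bar> + 1 > 0" using hnorm_nonneg[OF eH] by linarith
    have dpos: "\<delta> > 0" using e d1 by (simp add: \<delta>_def)
    obtain A c where A: "finite A" "hnorm ip (vsub f (polyf A c)) < \<delta>" using dense[OF f dpos] by blast
    let ?p = "polyf A c"
    have pH: "?p \<in> H" using polyf_in A by blast
    have dH: "vsub f ?p \<in> H" using vsub_in f pH by blast
    have "ip f ?e - ip (monomial_vec (\<lambda>_. 0) (f 0)) ?e
        = ip (vsub f ?p) ?e + (ip ?p ?e - ip (monomial_vec (\<lambda>_. 0) (?p 0)) ?e)
          + ip (vsub (monomial_vec (\<lambda>_. 0) (?p 0)) (monomial_vec (\<lambda>_. 0) (f 0))) ?e"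
      using f pH eH by (simp add: ip_sub1 mon_in)
    also have "\<dots> = ip (vsub f ?p) ?e + ip (monomial_vec (\<lambda>_. 0) (?p 0 - f 0)) ?e"
      using polyf_ip0[OF A(1)] by (simp add: mon_sub)
    finally have eq: "ip f ?e - ip (monomial_vec (\<lambda>_. 0) (f 0)) ?e = \<dots>" .
    have n1: "norm (ip (vsub f ?p) ?e) \<le> hnorm ip (vsub f ?p) * hnorm ip ?e" by (rule cs[OF dH eH])
    have "norm (?p 0 - f 0) = norm (vsub f ?p 0)" by (simp add: vsub_def norm_minus_commute)
    also have "\<dots> \<le> C0 * hnorm ip (vsub f ?p)" using C0 dH by blast
    finally have n2: "norm (ip (monomial_vec (\<lambda>_. 0) (?p 0 - f 0)) ?e) \<le> K * (C0 * hnorm ip (vsub f ?p))"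
      using K by (meson mult_left_mono order_trans)
    have "norm (ip f ?e - ip (monomial_vec (\<lambda>_. 0) (f 0)) ?e)
        \<le> hnorm ip (vsub f ?p) * hnorm ip ?e + K * (C0 * hnorm ip (vsub f ?p))"
      unfolding eq using n1 n2 norm_triangle_le add_mono by blast
    also have "\<dots> \<le> \<delta> * (hnorm ip ?e + K * \<bar>C0\<bar>)"
      by (rule aux_bound2) (use A hnorm_nonneg dH eH K in auto)
    also have "\<dots> \<le> e" using d1 dpos e hnorm_nonneg[OF eH] K unfolding \<delta>_def by (simp add: field_simps)
    finally show "norm (ip f ?e - ip (monomial_vec (\<lambda>_. 0) (f 0)) ?e) \<le> e" .
  qed
  then show ?thesis by simp
qed


lemma W_const: assumes g: "g \<in> H" and W: "\<And>j h. h \<in> H \<Longrightarrow> ip (Mz j h) g = 0"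
  shows "g = monomial_vec (\<lambda>_. 0) (g 0)"
proof -
  let ?c0 = "monomial_vec (\<lambda>_. 0) (g 0)"
  define h where "h = vsub g ?c0"
  have c0H: "?c0 \<in> H" by (rule mon_in)
  have hH: "h \<in> H" unfolding h_def using g c0H vsub_in by blast
  have h0: "h 0 = 0" unfolding h_def vsub_def by (simp add: mon_at0)
  have perp: "ip (monomial_vec \<alpha> x) h = 0" for \<alpha> x
  proof (cases "\<alpha> = (\<lambda>_. 0)")
    case True
    have "ip h (monomial_vec (\<lambda>_. 0) x) = 0"
      using eval_ip[OF hH] h0 by (simp add: mon_zero ip_zero1 mon_in)
    then show ?thesis using True ip_cnj[OF hH mon_in] by simp
  next
    case False
    then obtain j \<beta> where ab: "\<alpha> = \<beta>(j := Suc (\<beta> j))" using ne0_dec by blast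
    have "ip (monomial_vec \<alpha> x) g = 0" using W[OF mon_in, of j \<beta> x] ab by (simp add: Mz_mon)
    moreover have "ip (monomial_vec \<alpha> x) ?c0 = 0" using False orth by blast
    ultimately show ?thesis unfolding h_def by (simp add: ip_sub2 mon_in g c0H)
  qed
  have pperp: "finite A \<Longrightarrow> ip (polyf A c) h = 0" for A c
    unfolding polyf_def by (simp add: ip_sum1 mon_in hH perp)
  have "ip h h = 0"
  proof (rule small_zero)
    fix e :: real assume e: "e > 0"
    define \<delta> where "\<delta> = e / (hnorm ip h + 1)"
    have d1: "hnorm ip h + 1 > 0" using hnorm_nonneg[OF hH] by linarith
    have dpos: "\<delta> > 0" using e d1 unfolding \<delta>_def by (rule divide_pos_pos)
    obtain A c where A: "finite A" "hnorm ip (vsub h (polyf A c)) < \<delta>" using dense[OF hH dpos] by blast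
    have pH: "polyf A c \<in> H" using polyf_in A by blast
    have dH: "vsub h (polyf A c) \<in> H" using vsub_in hH pH by blast
    have "ip h h = ip (vsub h (polyf A c)) h" using ip_sub1[OF hH pH hH] pperp[OF A(1)] by simp
    then have "norm (ip h h) \<le> hnorm ip (vsub h (polyf A c)) * hnorm ip h" using cs[OF dH hH] by simp
    also have "\<dots> \<le> \<delta> * (hnorm ip h + 1)"
      using A(2) hnorm_nonneg[OF hH] hnorm_nonneg[OF dH] by (intro mult_mono) auto
    also have "\<dots> = e" unfolding \<delta>_def using d1 by simp
    finally show "norm (ip h h) \<le> e" .
  qed
  then have "h = (\<lambda>z. 0)" by (rule ip_def0[OF hH])
  then have hz: "h z = 0" for z by (rule fun_cong)
  have gz: "g z = ?c0 z" for z
  proof -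
    have "h z = g z - ?c0 z" unfolding h_def vsub_def by (rule refl)
    then show ?thesis using hz[of z] by (metis right_minus_eq)
  qed
  show ?thesis by (rule ext) (rule gz)
qed

end


definition Lu :: "complex^'d^'d \<Rightarrow> 'd::finite \<Rightarrow> ('d, 'n::finite) vfun \<Rightarrow> ('d, 'n) vfun" where
  "Lu u j f = (\<lambda>z. \<Sum>k\<in>UNIV. u $ j $ k *s Mz k f z)"

definition Fu :: "complex^'d^'d \<Rightarrow> ('d::finite \<Rightarrow> nat) \<Rightarrow> complex^'n::finite \<Rightarrow> ('d, 'n) vfun" where
  "Fu u \<alpha> \<xi> = restrB (\<lambda>z. (\<Prod>l\<in>UNIV. (\<Sum>k\<in>UNIV. u $ l $ k * z $ k) ^ (\<alpha> l)) *s \<xi>)"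

lemma prod_upd2: "(\<Prod>i\<in>UNIV. (w i) ^ ((\<alpha>(j := Suc (\<alpha> j))) i)) = w j * (\<Prod>i\<in>UNIV. (w i) ^ (\<alpha> i))"
  for w :: "'d::finite \<Rightarrow> complex"
proof -
  have "(\<Prod>i\<in>UNIV. (w i) ^ ((\<alpha>(j := Suc (\<alpha> j))) i)) = w j ^ Suc (\<alpha> j) * (\<Prod>i\<in>UNIV - {j}. (w i) ^ ((\<alpha>(j := Suc (\<alpha> j))) i))"
    by (subst prod.remove[of UNIV j]) auto
  also have "(\<Prod>i\<in>UNIV - {j}. (w i) ^ ((\<alpha>(j := Suc (\<alpha> j))) i)) = (\<Prod>i\<in>UNIV - {j}. (w i) ^ (\<alpha> i))"
    by (intro prod.cong) auto
  also have "(\<Prod>i\<in>UNIV. (w i) ^ (\<alpha> i)) = w j ^ \<alpha> j * (\<Prod>i\<in>UNIV - {j}. (w i) ^ (\<alpha> i))"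
    by (subst prod.remove[of UNIV j]) auto
  ultimately show ?thesis by simp
qed

lemma Fu_step: "Fu u (\<beta>(j := Suc (\<beta> j))) \<xi> = Lu u j (Fu u \<beta> \<xi>)"
proof (rule ext)
  fix z :: "complex^'a"
  let ?P = "\<Prod>l\<in>UNIV. (\<Sum>k\<in>UNIV. u $ l $ k * z $ k) ^ (\<beta> l)"
  have s: "(\<Sum>k\<in>UNIV. u $ j $ k *s (z $ k *s X)) = (\<Sum>k\<in>UNIV. u $ j $ k * z $ k) *s X" for X :: "complex^'b"
    by (simp add: vec_eq_iff sum_component sum_distrib_right mult.assoc)
  show "Fu u (\<beta>(j := Suc (\<beta> j))) \<xi> z = Lu u j (Fu u \<beta> \<xi>) z"
  proof (cases "z \<in> ballB")
    case True
    have "Fu u (\<beta>(j := Suc (\<beta> j))) \<xi> z = ((\<Sum>k\<in>UNIV. u $ j $ k * z $ k) * ?P) *s \<xi>"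
      unfolding Fu_def restrB_def using True by (simp add: prod_upd2[of "\<lambda>l. (\<Sum>k\<in>UNIV. u $ l $ k * z $ k)"] del: fun_upd_apply)
    also have "\<dots> = (\<Sum>k\<in>UNIV. u $ j $ k * z $ k) *s (?P *s \<xi>)" by (simp add: vec_eq_iff)
    also have "\<dots> = Lu u j (Fu u \<beta> \<xi>) z"
      unfolding Lu_def Mz_def Fu_def restrB_def using True by (simp add: vec_eq_iff sum_component sum_distrib_right sum_distrib_left algebra_simps)
    finally show ?thesis .
  next
    case False
    then show ?thesis unfolding Lu_def Mz_def Fu_def restrB_def by (simp add: vec_eq_iff)
  qed
qed

lemma Fu_zero: "Fu u (\<lambda>_. 0) \<xi> = monomial_vec (\<lambda>_. 0) \<xi>"
  unfolding Fu_def monomial_vec_def by simp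

lemma sum_upd_nat: "sum (\<beta>(j := Suc (\<beta> j))) (UNIV::'d::finite set) = Suc (sum \<beta> UNIV)"
proof -
  have "sum (\<beta>(j := Suc (\<beta> j))) (UNIV::'d set) = Suc (\<beta> j) + sum (\<beta>(j := Suc (\<beta> j))) (UNIV - {j})"
    by (subst sum.remove[of UNIV j]) auto
  also have "sum (\<beta>(j := Suc (\<beta> j))) (UNIV - {j}) = sum \<beta> (UNIV - {j})" by (intro sum.cong) auto
  also have "sum \<beta> (UNIV::'d set) = \<beta> j + sum \<beta> (UNIV - {j})" by (subst sum.remove[of UNIV j]) auto
  ultimately show ?thesis by simp
qed

context full
begin

lemma Lu_eq: "Lu u j f = (\<lambda>z. \<Sum>k\<in>UNIV. vscale (u $ j $ k) (Mz k f) z)"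
  unfolding Lu_def vscale_def by simp

lemma Lu_in: "f \<in> H \<Longrightarrow> Lu u j f \<in> H"
  unfolding Lu_eq by (rule sum_in) (auto intro: vscale_in Mz_in)

lemma ip_Lu: "f \<in> H \<Longrightarrow> g \<in> H \<Longrightarrow> ip (Lu u j f) g = (\<Sum>k\<in>UNIV. u $ j $ k * ip (Mz k f) g)"
  unfolding Lu_eq by (simp add: ip_sum1 vscale_in Mz_in ip_scale1)

lemma G_facts:
  assumes uo: "unitary_op H ip G"
    and tw: "\<And>j f. f \<in> H \<Longrightarrow> Mz j (G f) = G (Lu u j f)"
  shows "\<And>\<alpha> \<alpha>' \<xi>. \<alpha> \<noteq> \<alpha>' \<Longrightarrow> ip (Fu u \<alpha> \<xi>) (Fu u \<alpha>' \<xi>) = 0"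
proof -
  have bij: "bij_betw G H H" using uo unfolding unitary_op_def by blast
  have GH: "f \<in> H \<Longrightarrow> G f \<in> H" for f using bij bij_betwE by blast
  have Gip: "f \<in> H \<Longrightarrow> g \<in> H \<Longrightarrow> ip (G f) (G g) = ip f g" for f g using uo unfolding unitary_op_def by blast
  have Gc: "G (monomial_vec (\<lambda>_. 0) \<xi>) = monomial_vec (\<lambda>_. 0) (G (monomial_vec (\<lambda>_. 0) \<xi>) 0)" for \<xi>
  proof (rule W_const)
    show "G (monomial_vec (\<lambda>_. 0) \<xi>) \<in> H" by (rule GH[OF mon_in])
    fix j h assume hH: "h \<in> H"
    define h' where "h' = inv_into H G h"
    have h'H: "h' \<in> H" unfolding h'_def using bij hH by (metis bij_betw_def inv_into_into)
    have Gh': "G h' = h" unfolding h'_def using bij hH by (metis bij_betw_def f_inv_into_f)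
    have "ip (Mz j h) (G (monomial_vec (\<lambda>_. 0) \<xi>)) = ip (G (Lu u j h')) (G (monomial_vec (\<lambda>_. 0) \<xi>))"
      using tw[OF h'H, of j] Gh' by simp
    also have "\<dots> = ip (Lu u j h') (monomial_vec (\<lambda>_. 0) \<xi>)" by (rule Gip[OF Lu_in[OF h'H] mon_in])
    also have "\<dots> = 0" by (simp add: ip_Lu h'H mon_in const_perp)
    finally show "ip (Mz j h) (G (monomial_vec (\<lambda>_. 0) \<xi>)) = 0" .
  qed
  have main: "\<forall>\<alpha>. sum \<alpha> UNIV = n \<longrightarrow> Fu u \<alpha> \<xi> \<in> H \<and> G (Fu u \<alpha> \<xi>) = monomial_vec \<alpha> (G (monomial_vec (\<lambda>_. 0) \<xi>) 0)" for n \<xi>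
  proof (induction n)
    case 0
    show ?case
    proof (intro allI impI)
      fix \<alpha> :: "'d \<Rightarrow> nat" assume "sum \<alpha> UNIV = 0"
      then have "\<alpha> = (\<lambda>_. 0)" by (simp add: fun_eq_iff)
      then show "Fu u \<alpha> \<xi> \<in> H \<and> G (Fu u \<alpha> \<xi>) = monomial_vec \<alpha> (G (monomial_vec (\<lambda>_. 0) \<xi>) 0)"
        using Gc[of \<xi>] by (simp add: Fu_zero mon_in)
    qed
  next
    case (Suc n)
    show ?case
    proof (intro allI impI)
      fix \<alpha> :: "'d \<Rightarrow> nat" assume a: "sum \<alpha> UNIV = Suc n"
      then have "\<alpha> \<noteq> (\<lambda>_. 0)" by auto
      then obtain j \<beta> where ab: "\<alpha> = \<beta>(j := Suc (\<beta> j))" using ne0_dec by blast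
      then have "sum \<beta> UNIV = n" using a sum_upd_nat by (metis nat.inject)
      then have IH: "Fu u \<beta> \<xi> \<in> H" "G (Fu u \<beta> \<xi>) = monomial_vec \<beta> (G (monomial_vec (\<lambda>_. 0) \<xi>) 0)"
        using Suc.IH by auto
      have e: "Fu u \<alpha> \<xi> = Lu u j (Fu u \<beta> \<xi>)" using ab Fu_step by simp
      show "Fu u \<alpha> \<xi> \<in> H \<and> G (Fu u \<alpha> \<xi>) = monomial_vec \<alpha> (G (monomial_vec (\<lambda>_. 0) \<xi>) 0)"
        using e IH Lu_in tw[OF IH(1), of j] ab by (simp add: Mz_mon)
    qed
  qed
  fix \<alpha> \<alpha>' :: "'d \<Rightarrow> nat" and \<xi> assume ne: "\<alpha> \<noteq> \<alpha>'"
  have A: "Fu u \<alpha> \<xi> \<in> H" "G (Fu u \<alpha> \<xi>) = monomial_vec \<alpha> (G (monomial_vec (\<lambda>_. 0) \<xi>) 0)"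
    using main by blast+
  have B: "Fu u \<alpha>' \<xi> \<in> H" "G (Fu u \<alpha>' \<xi>) = monomial_vec \<alpha>' (G (monomial_vec (\<lambda>_. 0) \<xi>) 0)"
    using main by blast+
  have "ip (Fu u \<alpha> \<xi>) (Fu u \<alpha>' \<xi>) = ip (G (Fu u \<alpha> \<xi>)) (G (Fu u \<alpha>' \<xi>))" using Gip A(1) B(1) by simp
  also have "\<dots> = 0" using A(2) B(2) orth ne by simp
  finally show "ip (Fu u \<alpha> \<xi>) (Fu u \<alpha>' \<xi>) = 0" .
qed

end


definition rot :: "'d::finite \<Rightarrow> 'd \<Rightarrow> real \<Rightarrow> real \<Rightarrow> complex^'d^'d" where
  "rot i j c s = (\<chi> a b. if a = i then (if b = i then of_real c else if b = j then of_real s else 0)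
      else if a = j then (if b = i then - of_real s else if b = j then of_real c else 0)
      else (if b = a then 1 else 0))"

lemma sum_split_ij: fixes f :: "'d::finite \<Rightarrow> 'b::comm_monoid_add"
  assumes "i \<noteq> j" shows "(\<Sum>b\<in>UNIV. f b) = f i + f j + (\<Sum>b\<in>UNIV - {i, j}. f b)"
proof -
  have "(\<Sum>b\<in>UNIV. f b) = (\<Sum>b\<in>{i, j}. f b) + (\<Sum>b\<in>UNIV - {i, j}. f b)"
    using sum.subset_diff[of "{i,j}" UNIV f] by (simp add: add.commute)
  then show ?thesis using assms by simp
qed

lemma prod_split_ij: fixes f :: "'d::finite \<Rightarrow> 'b::comm_monoid_mult"
  assumes "i \<noteq> j" shows "(\<Prod>b\<in>UNIV. f b) = f i * f j * (\<Prod>b\<in>UNIV - {i, j}. f b)"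
proof -
  have "(\<Prod>b\<in>UNIV. f b) = (\<Prod>b\<in>{i, j}. f b) * (\<Prod>b\<in>UNIV - {i, j}. f b)"
    using prod.subset_diff[of "{i,j}" UNIV f] by (simp add: mult.commute)
  then show ?thesis using assms by simp
qed

lemma rot_unitary: assumes ij: "i \<noteq> j" and cs: "c^2 + s^2 = 1"
  shows "unitary_mat (rot i j c s)"
  unfolding unitary_mat_def
proof (intro allI)
  fix a k
  let ?u = "rot i j c s"
  have rest: "(\<Sum>b\<in>UNIV - {i, j}. ?u $ a $ b * cnj (?u $ k $ b)) = (if a = k \<and> a \<noteq> i \<and> a \<noteq> j then 1 else 0)"
  proof -
    have "(\<Sum>b\<in>UNIV - {i, j}. ?u $ a $ b * cnj (?u $ k $ b)) = (\<Sum>b\<in>UNIV - {i, j}. if b = a then (if a = k \<and> a \<noteq> i \<and> a \<noteq> j then 1 else 0) else 0)"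
      by (intro sum.cong refl) (auto simp: rot_def)
    also have "\<dots> = (if a = k \<and> a \<noteq> i \<and> a \<noteq> j then 1 else 0)" by (simp add: sum.delta)
    finally show ?thesis .
  qed
  have cs': "complex_of_real c * complex_of_real c + complex_of_real s * complex_of_real s = 1"
    using cs by (metis of_real_1 of_real_add of_real_mult power2_eq_square)
  show "(\<Sum>b\<in>UNIV. ?u $ a $ b * cnj (?u $ k $ b)) = (if a = k then 1 else 0)"
    unfolding sum_split_ij[OF ij] rest using ij cs'
    by (auto simp: rot_def algebra_simps)
qed

lemma rot_apply: assumes ij: "i \<noteq> j"
  shows "(\<Sum>k\<in>UNIV. rot i j c s $ l $ k * z $ k) =
    (if l = i then of_real c * z $ i + of_real s * z $ j else if l = j then - of_real s * z $ i + of_real c * z $ j else z $ l)"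
proof -
  have rest: "(\<Sum>k\<in>UNIV - {i, j}. rot i j c s $ l $ k * z $ k) = (if l \<noteq> i \<and> l \<noteq> j then z $ l else 0)"
  proof -
    have "(\<Sum>k\<in>UNIV - {i, j}. rot i j c s $ l $ k * z $ k) = (\<Sum>k\<in>UNIV - {i, j}. if k = l then (if l \<noteq> i \<and> l \<noteq> j then z $ l else 0) else 0)"
      by (intro sum.cong refl) (auto simp: rot_def)
    also have "\<dots> = (if l \<noteq> i \<and> l \<noteq> j then z $ l else 0)" by (simp add: sum.delta)
    finally show ?thesis .
  qed
  show ?thesis unfolding sum_split_ij[OF ij] rest using ij by (auto simp: rot_def)
qed

lemma prod_ij: fixes w v :: "'d::finite \<Rightarrow> complex"
  assumes ij: "i \<noteq> j" and g: "\<gamma> i = 0" "\<gamma> j = 0" and wv: "\<And>l. l \<noteq> i \<Longrightarrow> l \<noteq> j \<Longrightarrow> w l = v l"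
  shows "(\<Prod>l\<in>UNIV. w l ^ ((\<gamma>(i := a, j := b)) l)) = w i ^ a * w j ^ b * (\<Prod>l\<in>UNIV. v l ^ \<gamma> l)"
proof -
  have "(\<Prod>l\<in>UNIV - {i, j}. w l ^ ((\<gamma>(i := a, j := b)) l)) = (\<Prod>l\<in>UNIV - {i, j}. v l ^ \<gamma> l)"
    using wv by (intro prod.cong refl) auto
  moreover have "(\<Prod>l\<in>UNIV. v l ^ \<gamma> l) = (\<Prod>l\<in>UNIV - {i, j}. v l ^ \<gamma> l)"
    unfolding prod_split_ij[OF ij] using g by simp
  ultimately show ?thesis unfolding prod_split_ij[OF ij, of "\<lambda>l. w l ^ ((\<gamma>(i := a, j := b)) l)"] using ij by simp
qed



lemma restr_sum_mon: "(\<lambda>z. \<Sum>k\<in>K. monomial_vec (\<beta> k) (a k *s \<xi>) z) =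
   restrB (\<lambda>z. (\<Sum>k\<in>K. a k * (\<Prod>l\<in>UNIV. (z $ l) ^ (\<beta> k l))) *s \<xi>)"
  unfolding monomial_vec_def restrB_def
  by (rule ext) (simp add: vec_eq_iff sum_component sum_distrib_right sum_distrib_left algebra_simps)

lemma restr_sum_mon_pt: "(\<Sum>k\<in>K. monomial_vec (\<beta> k) (a k *s \<xi>) z) =
   restrB (\<lambda>z. (\<Sum>k\<in>K. a k * (\<Prod>l\<in>UNIV. (z $ l) ^ (\<beta> k l))) *s \<xi>) z"
proof -
  have "(\<lambda>z. \<Sum>k\<in>K. monomial_vec (\<beta> k) (a k *s \<xi>) z) =
   restrB (\<lambda>z. (\<Sum>k\<in>K. a k * (\<Prod>l\<in>UNIV. (z $ l) ^ (\<beta> k l))) *s \<xi>)" by (rule restr_sum_mon)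
  then show ?thesis by (rule fun_cong)
qed

lemma restr_add: "(\<lambda>z. restrB f z + restrB g z) = restrB (\<lambda>z. f z + g z)"
  unfolding restrB_def by (rule ext) simp

lemma restr_cong: "(\<And>z. z \<in> ballB \<Longrightarrow> f z = g z) \<Longrightarrow> restrB f = restrB g"
  unfolding restrB_def by (rule ext) simp

context
  fixes i j :: "'d::finite" and \<gamma> :: "'d \<Rightarrow> nat" and M :: nat and c s :: real
  assumes ij: "i \<noteq> j" and g0: "\<gamma> i = 0" "\<gamma> j = 0"
begin

definition bet :: "nat \<Rightarrow> 'd \<Rightarrow> nat" where "bet k = \<gamma>(i := k, j := Suc M - k)"

definition ca :: "nat \<Rightarrow> complex" where
  "ca k = of_nat (Suc M choose k) * of_real c ^ k * of_real s ^ (Suc M - k)"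
definition cb1 :: "nat \<Rightarrow> complex" where
  "cb1 m = - of_real s * of_nat (M choose m) * of_real c ^ m * of_real s ^ (M - m)"
definition cb2 :: "nat \<Rightarrow> complex" where
  "cb2 m = of_nat (M choose m) * of_real c ^ Suc m * of_real s ^ (M - m)"

lemma zbet: "(\<Prod>l\<in>UNIV. ((z::complex^'d) $ l) ^ (bet k l)) = z $ i ^ k * z $ j ^ (Suc M - k) * (\<Prod>l\<in>UNIV. (z $ l) ^ (\<gamma> l))"
  unfolding bet_def using prod_ij[OF ij g0, where w="\<lambda>l. z $ l" and v="\<lambda>l. z $ l"] by simp

lemma w_rot: "(\<Prod>l\<in>UNIV. (\<Sum>k\<in>UNIV. rot i j c s $ l $ k * z $ k) ^ ((\<gamma>(i := a, j := b)) l)) =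
   (of_real c * z $ i + of_real s * z $ j) ^ a * (- of_real s * z $ i + of_real c * z $ j) ^ b * (\<Prod>l\<in>UNIV. (z $ l) ^ (\<gamma> l))"
  by (subst prod_ij[OF ij g0, where v = "\<lambda>l. z $ l"]) (use ij in \<open>simp_all add: rot_apply\<close>)

lemma FA: "Fu (rot i j c s) (\<gamma>(i := Suc M, j := 0)) \<xi> = (\<lambda>z. \<Sum>k\<le>Suc M. monomial_vec (bet k) (ca k *s \<xi>) z)"
  unfolding restr_sum_mon Fu_def
proof (rule restr_cong)
  fix z :: "complex^'d"
  have "(of_real c * z $ i + of_real s * z $ j) ^ Suc M = (\<Sum>k\<le>Suc M. of_nat (Suc M choose k) * (of_real c * z $ i) ^ k * (of_real s * z $ j) ^ (Suc M - k))"
    by (rule binomial_ring)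
  then have "(of_real c * z $ i + of_real s * z $ j) ^ Suc M * (- of_real s * z $ i + of_real c * z $ j) ^ 0 * (\<Prod>l\<in>UNIV. (z $ l) ^ (\<gamma> l))
     = (\<Sum>k\<le>Suc M. of_nat (Suc M choose k) * (of_real c * z $ i) ^ k * (of_real s * z $ j) ^ (Suc M - k)) * (\<Prod>l\<in>UNIV. (z $ l) ^ (\<gamma> l))"
    by (simp only: power_0 mult_1_right)
  also have "\<dots> = (\<Sum>k\<le>Suc M. of_nat (Suc M choose k) * (of_real c * z $ i) ^ k * (of_real s * z $ j) ^ (Suc M - k) * (\<Prod>l\<in>UNIV. (z $ l) ^ (\<gamma> l)))"
    by (rule sum_distrib_right)
  also have "\<dots> = (\<Sum>k\<le>Suc M. ca k * (z $ i ^ k * z $ j ^ (Suc M - k) * (\<Prod>l\<in>UNIV. (z $ l) ^ (\<gamma> l))))"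
    by (rule sum.cong[OF refl]) (simp add: ca_def power_mult_distrib algebra_simps)
  finally have e: "(of_real c * z $ i + of_real s * z $ j) ^ Suc M * (- of_real s * z $ i + of_real c * z $ j) ^ 0 * (\<Prod>l\<in>UNIV. (z $ l) ^ (\<gamma> l))
     = (\<Sum>k\<le>Suc M. ca k * (z $ i ^ k * z $ j ^ (Suc M - k) * (\<Prod>l\<in>UNIV. (z $ l) ^ (\<gamma> l))))" .
  show "(\<Prod>l\<in>UNIV. (\<Sum>k\<in>UNIV. rot i j c s $ l $ k * z $ k) ^ ((\<gamma>(i := Suc M, j := 0)) l)) *s \<xi> =
         (\<Sum>k\<le>Suc M. ca k * (\<Prod>l\<in>UNIV. z $ l ^ bet k l)) *s \<xi>"
    unfolding w_rot zbet e by (rule refl)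
qed

lemma FB: "Fu (rot i j c s) (\<gamma>(i := M, j := 1)) \<xi> =
   (\<lambda>z. (\<Sum>m\<le>M. monomial_vec (bet (Suc m)) (cb1 m *s \<xi>) z) + (\<Sum>m\<le>M. monomial_vec (bet m) (cb2 m *s \<xi>) z))"
  unfolding restr_sum_mon_pt restr_add Fu_def
proof (rule restr_cong)
  fix z :: "complex^'d"
  have b: "(of_real c * z $ i + of_real s * z $ j) ^ M = (\<Sum>m\<le>M. of_nat (M choose m) * (of_real c * z $ i) ^ m * (of_real s * z $ j) ^ (M - m))"
    by (rule binomial_ring)
  have "(of_real c * z $ i + of_real s * z $ j) ^ M * (- of_real s * z $ i + of_real c * z $ j)
      = (\<Sum>m\<le>M. of_nat (M choose m) * (of_real c * z $ i) ^ m * (of_real s * z $ j) ^ (M - m) * (- of_real s * z $ i + of_real c * z $ j))"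
    unfolding b by (simp add: sum_distrib_right)
  also have "\<dots> = (\<Sum>m\<le>M. cb1 m * (z $ i ^ Suc m * z $ j ^ (Suc M - Suc m)) + cb2 m * (z $ i ^ m * z $ j ^ (Suc M - m)))"
  proof (intro sum.cong refl)
    fix m assume "m \<in> {..M}"
    then have "Suc M - m = Suc (M - m)" by auto
    then show "of_nat (M choose m) * (of_real c * z $ i) ^ m * (of_real s * z $ j) ^ (M - m) * (- of_real s * z $ i + of_real c * z $ j)
       = cb1 m * (z $ i ^ Suc m * z $ j ^ (Suc M - Suc m)) + cb2 m * (z $ i ^ m * z $ j ^ (Suc M - m))"
      unfolding cb1_def cb2_def by (simp add: power_mult_distrib algebra_simps)
  qed
  finally have e: "(of_real c * z $ i + of_real s * z $ j) ^ M * (- of_real s * z $ i + of_real c * z $ j) = \<dots>" .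
  have scal: "(\<Sum>m\<le>M. cb1 m * (z $ i ^ Suc m * z $ j ^ (Suc M - Suc m)) + cb2 m * (z $ i ^ m * z $ j ^ (Suc M - m))) * (\<Prod>l\<in>UNIV. (z $ l) ^ (\<gamma> l))
     = (\<Sum>m\<le>M. cb1 m * (z $ i ^ Suc m * z $ j ^ (Suc M - Suc m) * (\<Prod>l\<in>UNIV. (z $ l) ^ (\<gamma> l))))
     + (\<Sum>m\<le>M. cb2 m * (z $ i ^ m * z $ j ^ (Suc M - m) * (\<Prod>l\<in>UNIV. (z $ l) ^ (\<gamma> l))))"
    by (simp add: sum_distrib_right sum_distrib_left sum.distrib algebra_simps del: sum.atMost_Suc)
  show "(\<Prod>l\<in>UNIV. (\<Sum>k\<in>UNIV. rot i j c s $ l $ k * z $ k) ^ ((\<gamma>(i := M, j := 1)) l)) *s \<xi> =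
         (\<Sum>m\<le>M. cb1 m * (\<Prod>l\<in>UNIV. z $ l ^ bet (Suc m) l)) *s \<xi> + (\<Sum>m\<le>M. cb2 m * (\<Prod>l\<in>UNIV. z $ l ^ bet m l)) *s \<xi>"
    unfolding w_rot zbet power_one_right e scal by (rule vector_sadd_rdistrib)
qed

end


context full
begin

context
  fixes i j :: 'd and \<gamma> :: "'d \<Rightarrow> nat" and M :: nat and c s :: real and \<xi> :: "complex^'n"
  assumes ij: "i \<noteq> j" and g0: "\<gamma> i = 0" "\<gamma> j = 0"
begin

abbreviation "bt \<equiv> bet i j \<gamma> M"
abbreviation "wt k \<equiv> ip (monomial_vec (bt k) \<xi>) (monomial_vec (bt k) \<xi>)"

lemma bt_inj: "bt k = bt m \<Longrightarrow> k = m"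
proof -
  assume "bt k = bt m"
  then have "bt k i = bt m i" by simp
  then show "k = m" unfolding bet_def[OF ij g0] using ij by simp
qed

lemma ip_mm: "ip (monomial_vec (bt k) (a *s \<xi>)) (monomial_vec (bt m) (y *s \<xi>)) = (if k = m then a * cnj y * wt m else 0)"
proof (cases "k = m")
  case True then show ?thesis by (simp add: mon_scale ip_scale1 ip_scale2 mon_in vscale_in)
next
  case False then show ?thesis using orth bt_inj by metis
qed

lemma ipA_mon: "ip (\<lambda>z. \<Sum>k\<le>Suc M. monomial_vec (bt k) (ca M c s k *s \<xi>) z) (monomial_vec (bt m) (y *s \<xi>))
   = (if m \<le> Suc M then ca M c s m * cnj y * wt m else 0)"
proof -
  have "ip (\<lambda>z. \<Sum>k\<le>Suc M. monomial_vec (bt k) (ca M c s k *s \<xi>) z) (monomial_vec (bt m) (y *s \<xi>))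
     = (\<Sum>k\<le>Suc M. ip (monomial_vec (bt k) (ca M c s k *s \<xi>)) (monomial_vec (bt m) (y *s \<xi>)))"
    by (rule ip_sum1) (auto intro: mon_in)
  also have "\<dots> = (\<Sum>k\<le>Suc M. if k = m then ca M c s m * cnj y * wt m else 0)"
    by (intro sum.cong refl) (simp add: ip_mm)
  also have "\<dots> = (if m \<le> Suc M then ca M c s m * cnj y * wt m else 0)"
    by (simp add: sum.delta')
  finally show ?thesis .
qed

lemma ip_FA_FB: "ip (Fu (rot i j c s) (\<gamma>(i := Suc M, j := 0)) \<xi>) (Fu (rot i j c s) (\<gamma>(i := M, j := 1)) \<xi>)
  = (\<Sum>m\<le>M. ca M c s (Suc m) * cnj (cb1 M c s m) * wt (Suc m)) + (\<Sum>m\<le>M. ca M c s m * cnj (cb2 M c s m) * wt m)"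
proof -
  let ?A = "\<lambda>z. \<Sum>k\<le>Suc M. monomial_vec (bt k) (ca M c s k *s \<xi>) z"
  let ?S1 = "\<lambda>z. \<Sum>m\<le>M. monomial_vec (bt (Suc m)) (cb1 M c s m *s \<xi>) z"
  let ?S2 = "\<lambda>z. \<Sum>m\<le>M. monomial_vec (bt m) (cb2 M c s m *s \<xi>) z"
  have AH: "?A \<in> H" by (rule sum_in) (auto intro: mon_in)
  have S1H: "?S1 \<in> H" by (rule sum_in) (auto intro: mon_in)
  have S2H: "?S2 \<in> H" by (rule sum_in) (auto intro: mon_in)
  have FB': "Fu (rot i j c s) (\<gamma>(i := M, j := 1)) \<xi> = vadd ?S1 ?S2"
    unfolding FB[OF ij g0] vadd_def by simp
  have "ip ?A (vadd ?S1 ?S2) = ip ?A ?S1 + ip ?A ?S2" by (rule ip_add2[OF AH S1H S2H])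
  also have "ip ?A ?S1 = (\<Sum>m\<le>M. ip ?A (monomial_vec (bt (Suc m)) (cb1 M c s m *s \<xi>)))"
    by (rule ip_sum2[OF _ _ AH]) (auto intro: mon_in)
  also have "\<dots> = (\<Sum>m\<le>M. ca M c s (Suc m) * cnj (cb1 M c s m) * wt (Suc m))"
    by (intro sum.cong refl) (simp add: ipA_mon del: sum.atMost_Suc)
  also have "ip ?A ?S2 = (\<Sum>m\<le>M. ip ?A (monomial_vec (bt m) (cb2 M c s m *s \<xi>)))"
    by (rule ip_sum2[OF _ _ AH]) (auto intro: mon_in)
  also have "\<dots> = (\<Sum>m\<le>M. ca M c s m * cnj (cb2 M c s m) * wt m)"
    by (intro sum.cong refl) (simp add: ipA_mon del: sum.atMost_Suc)
  finally show ?thesis unfolding FA[OF ij g0] FB' .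
qed

lemma ip_FA_FB2: "ip (Fu (rot i j c s) (\<gamma>(i := Suc M, j := 0)) \<xi>) (Fu (rot i j c s) (\<gamma>(i := M, j := 1)) \<xi>)
  = (\<Sum>m\<le>M. of_nat (M choose m) * (of_real c ^ (2*m+1) * of_real s ^ (2*(M-m)+1)) *
        (of_nat (Suc M choose m) * wt m - of_nat (Suc M choose Suc m) * wt (Suc m)))"
  unfolding ip_FA_FB sum.distrib[symmetric]
proof (intro sum.cong refl)
  fix m assume "m \<in> {..M}"
  then have mM: "m \<le> M" by simp
  then have e1: "Suc M - m = Suc (M - m)" by simp
  have p1: "(of_real c :: complex) ^ (2*m+1) = of_real c ^ Suc m * of_real c ^ m"
    by (simp add: power_add[symmetric] mult_2)
  have p2: "(of_real s :: complex) ^ (2*(M-m)+1) = of_real s ^ Suc (M - m) * of_real s ^ (M - m)"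
    by (simp add: power_add[symmetric] mult_2)
  show "ca M c s (Suc m) * cnj (cb1 M c s m) * wt (Suc m) + ca M c s m * cnj (cb2 M c s m) * wt m =
    of_nat (M choose m) * (of_real c ^ (2*m+1) * of_real s ^ (2*(M-m)+1)) *
        (of_nat (Suc M choose m) * wt m - of_nat (Suc M choose Suc m) * wt (Suc m))"
    unfolding ca_def[OF ij g0] cb1_def[OF ij g0] cb2_def[OF ij g0] p1 p2 e1
    by (simp add: algebra_simps)
qed

end
end


lemma infinite_pos_complex: "infinite (complex_of_real ` {0<..})"
proof
  assume "finite (complex_of_real ` {0<..})"
  moreover have "inj_on complex_of_real {0<..}" by (simp add: inj_on_def)
  ultimately have "finite {0::real<..}" using finite_imageD by blast
  then show False using infinite_Ioi by blast
qed

lemma pow_identity: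
  fixes t s x :: real assumes x: "x = t^2" and mM: "m \<le> M"
  shows "(t * s) ^ (2*m+1) * s ^ (2*(M-m)+1) = t * s ^ (2*M+2) * x ^ m"
proof -
  have "(t * s) ^ (2*m+1) = t * (t^2)^m * s ^ (2*m+1)"
    by (simp add: power_mult_distrib power_mult[symmetric] mult_2 algebra_simps)
  moreover have "s ^ (2*m+1) * s ^ (2*(M-m)+1) = s ^ (2*M+2)"
  proof -
    have "2*m+1 + (2*(M-m)+1) = 2*M+2" using mM by simp
    then show ?thesis by (metis power_add)
  qed
  ultimately have "(t * s) ^ (2*m+1) * s ^ (2*(M-m)+1) = t * (t^2)^m * s ^ (2*M+2)"
    by (metis mult.assoc)
  then show ?thesis using x by (simp add: algebra_simps)
qed

context full
begin

lemma rel: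
  assumes Ud: "Ud_homogeneous H ip" and ij: "i \<noteq> j" and g0: "\<gamma> i = 0" "\<gamma> j = 0" and mM: "m \<le> M"
  shows "of_nat (Suc M choose m) * ip (monomial_vec (bet i j \<gamma> M m) \<xi>) (monomial_vec (bet i j \<gamma> M m) \<xi>)
       = of_nat (Suc M choose Suc m) * ip (monomial_vec (bet i j \<gamma> M (Suc m)) \<xi>) (monomial_vec (bet i j \<gamma> M (Suc m)) \<xi>)"
proof -
  define w where "w k = ip (monomial_vec (bet i j \<gamma> M k) \<xi>) (monomial_vec (bet i j \<gamma> M k) \<xi>)" for k
  define e where "e m = of_nat (Suc M choose m) * w m - of_nat (Suc M choose Suc m) * w (Suc m)" for m
  define q where "q m = of_nat (M choose m) * e m" for m
  have roots: "(\<Sum>m\<le>M. q m * x ^ m) = 0" if xpos: "x \<in> complex_of_real ` {0<..}" for x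
  proof -
    obtain y :: real where y: "y > 0" "x = of_real y" using xpos by auto
    define t where "t = sqrt y"
    define s where "s = 1 / sqrt (1 + y)"
    define c where "c = t * s"
    have tpos: "t > 0" using y unfolding t_def by simp
    have spos: "s > 0" using y unfolding s_def by simp
    have yt: "y = t^2" using y unfolding t_def by simp
    have s2: "s^2 = 1 / (1 + y)" using y unfolding s_def by (simp add: power_divide)
    have cs: "c^2 + s^2 = 1" unfolding c_def power_mult_distrib s2 yt[symmetric] using y
      by (simp add: field_simps)
    obtain G where G: "unitary_op H ip G" "\<forall>j'. \<forall>f\<in>H. Mz j' (G f) = G (\<lambda>z. \<Sum>k\<in>UNIV. rot i j c s $ j' $ k *s Mz k f z)"
      using Ud rot_unitary[OF ij cs] unfolding Ud_homogeneous_def by blast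
    have tw: "\<And>j' f. f \<in> H \<Longrightarrow> Mz j' (G f) = G (Lu (rot i j c s) j' f)"
      using G(2) unfolding Lu_def by blast
    have ne: "\<gamma>(i := Suc M, j := 0) \<noteq> \<gamma>(i := M, j := 1)"
      by (metis fun_upd_same zero_neq_one)
    have "0 = ip (Fu (rot i j c s) (\<gamma>(i := Suc M, j := 0)) \<xi>) (Fu (rot i j c s) (\<gamma>(i := M, j := 1)) \<xi>)"
      using G_facts[OF G(1) tw ne] by simp
    also have "\<dots> = (\<Sum>m\<le>M. of_nat (M choose m) * (of_real c ^ (2*m+1) * of_real s ^ (2*(M-m)+1)) * e m)"
      unfolding ip_FA_FB2[OF ij g0] e_def w_def by simp
    also have "\<dots> = (\<Sum>m\<le>M. of_real (t * s ^ (2*M+2)) * (q m * x ^ m))"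
    proof (intro sum.cong refl)
      fix m assume "m \<in> {..M}"
      then have "(t * s) ^ (2*m+1) * s ^ (2*(M-m)+1) = t * s ^ (2*M+2) * y ^ m"
        using pow_identity[OF yt] by simp
      then have "(of_real ((t * s) ^ (2*m+1) * s ^ (2*(M-m)+1)) :: complex) = of_real (t * s ^ (2*M+2) * y ^ m)"
        by (rule arg_cong)
      then have P: "(of_real c :: complex) ^ (2*m+1) * of_real s ^ (2*(M-m)+1) = of_real (t * s ^ (2*M+2)) * x ^ m"
        unfolding c_def y(2) by (simp only: of_real_mult of_real_power)
      show "of_nat (M choose m) * (of_real c ^ (2*m+1) * of_real s ^ (2*(M-m)+1)) * e m = of_real (t * s ^ (2*M+2)) * (q m * x ^ m)"
        unfolding q_def P by (simp add: algebra_simps)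
    qed
    also have "\<dots> = of_real (t * s ^ (2*M+2)) * (\<Sum>m\<le>M. q m * x ^ m)" by (simp add: sum_distrib_left)
    finally have "of_real (t * s ^ (2*M+2)) * (\<Sum>m\<le>M. q m * x ^ m) = 0" by simp
    moreover have "t * s ^ (2*M+2) \<noteq> 0" using tpos spos by simp
    ultimately show ?thesis by simp
  qed
  have "\<not> (\<exists>k\<le>M. q k \<noteq> 0)"
  proof
    assume "\<exists>k\<le>M. q k \<noteq> 0"
    then have "finite {x. (\<Sum>k\<le>M. q k * x ^ k) = 0}" using polyfun_finite_roots by blast
    moreover have "complex_of_real ` {0<..} \<subseteq> {x. (\<Sum>k\<le>M. q k * x ^ k) = 0}" using roots by blast
    ultimately show False using infinite_pos_complex finite_subset by blast
  qed
  then have "q m = 0" using mM by blast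
  moreover have "(M choose m) \<noteq> 0" using mM by simp
  ultimately have "e m = 0" unfolding q_def by simp
  then show ?thesis unfolding e_def w_def by simp
qed

end


lemma mi_fact_split: assumes ij: "i \<noteq> j"
  shows "mi_fact \<beta> = fact (\<beta> i) * fact (\<beta> j) * (\<Prod>l\<in>UNIV - {i, j}. fact (\<beta> l))"
  unfolding mi_fact_def using prod_split_ij[OF ij] by blast

lemma mi_fact_pos: "mi_fact \<beta> > 0"
  unfolding mi_fact_def by (simp add: prod_pos)

context full
begin

lemma step:
  assumes Ud: "Ud_homogeneous H ip" and ij: "i \<noteq> j" and bj: "\<beta> j \<ge> 1"
  defines "\<beta>' \<equiv> \<beta>(i := Suc (\<beta> i), j := \<beta> j - 1)"
  shows "ip (monomial_vec \<beta> \<xi>) (monomial_vec \<beta> \<xi>) * of_nat (mi_fact \<beta>')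
       = ip (monomial_vec \<beta>' \<xi>) (monomial_vec \<beta>' \<xi>) * of_nat (mi_fact \<beta>)"
proof -
  define \<gamma> where "\<gamma> = \<beta>(i := 0, j := 0)"
  define M where "M = \<beta> i + \<beta> j - 1"
  define m where "m = \<beta> i"
  have g0: "\<gamma> i = 0" "\<gamma> j = 0" unfolding \<gamma>_def by auto
  have mM: "m \<le> M" unfolding m_def M_def using bj by simp
  have N: "Suc M = \<beta> i + \<beta> j" unfolding M_def using bj by simp
  have b1: "bet i j \<gamma> M m = \<beta>" unfolding bet_def[OF ij g0] unfolding \<gamma>_def m_def using N ij by (auto simp: fun_eq_iff)
  have b2: "bet i j \<gamma> M (Suc m) = \<beta>'" unfolding bet_def[OF ij g0] unfolding \<gamma>_def m_def \<beta>'_def using N ij by (auto simp: fun_eq_iff)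
  define Q where "Q = ip (monomial_vec \<beta> \<xi>) (monomial_vec \<beta> \<xi>)"
  define Q' where "Q' = ip (monomial_vec \<beta>' \<xi>) (monomial_vec \<beta>' \<xi>)"
  have r: "of_nat (Suc M choose m) * Q = of_nat (Suc M choose Suc m) * Q'"
    using rel[OF Ud ij g0 mM, of \<xi>] unfolding b1 b2 Q_def Q'_def .
  have f1: "fact m * fact (Suc M - m) * (Suc M choose m) = (fact (Suc M) :: nat)"
    using mM by (intro binomial_fact_lemma) simp
  have f2: "fact (Suc m) * fact (Suc M - Suc m) * (Suc M choose Suc m) = (fact (Suc M) :: nat)"
    using mM by (intro binomial_fact_lemma) simp
  have bi: "\<beta> i = m" "\<beta> j = Suc M - m" "\<beta>' i = Suc m" "\<beta>' j = Suc M - Suc m"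
    unfolding \<beta>'_def m_def using N ij by auto
  define R where "R = (\<Prod>l\<in>UNIV - {i, j}. fact (\<beta> l) :: nat)"
  have R': "(\<Prod>l\<in>UNIV - {i, j}. fact (\<beta>' l) :: nat) = R" unfolding R_def \<beta>'_def by (intro prod.cong) auto
  have mf: "mi_fact \<beta> = fact m * fact (Suc M - m) * R" "mi_fact \<beta>' = fact (Suc m) * fact (Suc M - Suc m) * R"
    using mi_fact_split[OF ij, of \<beta>] mi_fact_split[OF ij, of \<beta>'] bi R' unfolding R_def by auto
  define a where "a = (fact m * fact (Suc M - m) :: nat)"
  define b where "b = (fact (Suc m) * fact (Suc M - Suc m) :: nat)"
  have "of_nat (a * b) * (of_nat (Suc M choose m) * Q) = of_nat (a * b) * (of_nat (Suc M choose Suc m) * Q')"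
    using r by simp
  then have "of_nat (b * (a * (Suc M choose m))) * Q = of_nat (a * (b * (Suc M choose Suc m))) * Q'"
    by (simp add: algebra_simps)
  moreover have aC: "a * (Suc M choose m) = fact (Suc M)" unfolding a_def by (rule f1)
  moreover have bC: "b * (Suc M choose Suc m) = fact (Suc M)" unfolding b_def by (rule f2)
  ultimately have "of_nat (b * fact (Suc M)) * Q = of_nat (a * fact (Suc M)) * Q'"
    by (simp only:)
  then have "of_nat (fact (Suc M)) * (of_nat b * Q) = of_nat (fact (Suc M)) * (of_nat a * Q')"
    by (simp add: algebra_simps)
  moreover have "(of_nat (fact (Suc M)) :: complex) \<noteq> 0" by (metis of_nat_eq_0_iff fact_nonzero)
  ultimately have "of_nat b * Q = of_nat a * Q'" by (metis mult_left_cancel)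
  then have "Q * of_nat (b * R) = Q' * of_nat (a * R)" by (simp add: algebra_simps)
  then show ?thesis unfolding Q_def Q'_def mf a_def b_def .
qed

end


definition topidx :: "'d \<Rightarrow> nat \<Rightarrow> 'd \<Rightarrow> nat" where "topidx i0 n = (\<lambda>l. if l = i0 then n else 0)"

lemma norm_axis_c: "norm (axis i (x::complex) :: complex^'d::finite) = norm x"
proof -
  have "(\<Sum>l\<in>UNIV. (norm (axis i x $ l))^2) = (\<Sum>l\<in>UNIV. if l = i then (norm x)^2 else 0)"
    by (intro sum.cong refl) (simp add: axis_def)
  then have "(\<Sum>l\<in>UNIV. (norm (axis i x $ l))^2) = (norm x)^2" by simp
  then show ?thesis unfolding norm_vec_def L2_set_def by simp
qed

lemma mon_nonzero: fixes i0 :: "'d::finite" assumes "\<xi> \<noteq> 0" shows "monomial_vec (topidx i0 n) \<xi> \<noteq> (\<lambda>z. 0)"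
proof
  assume a: "monomial_vec (topidx i0 n) \<xi> = (\<lambda>z. 0)"
  let ?z = "axis i0 (1/2 :: complex) :: complex^'d"
  have zb: "?z \<in> ballB" unfolding ballB_def by (simp add: norm_axis_c)
  have "\<forall>l. (?z $ l) ^ (topidx i0 n l) \<noteq> 0" by (simp add: topidx_def axis_def)
  then have P: "(\<Prod>l\<in>UNIV. (?z $ l) ^ (topidx i0 n l)) \<noteq> 0" by simp
  have "(\<Prod>l\<in>UNIV. (?z $ l) ^ (topidx i0 n l)) *s \<xi> = 0"
    using fun_cong[OF a, of ?z] zb unfolding monomial_vec_def restrB_def by simp
  then have "\<forall>k. \<xi> $ k = 0" using P by (simp add: vec_eq_iff)
  then show False using assms by (simp add: vec_eq_iff)
qed

context full
begin

lemma chain: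
  assumes Ud: "Ud_homogeneous H ip"
  shows "ip (monomial_vec \<beta> \<xi>) (monomial_vec \<beta> \<xi>) * of_nat (fact (mi_abs \<beta>))
       = ip (monomial_vec (topidx i0 (mi_abs \<beta>)) \<xi>) (monomial_vec (topidx i0 (mi_abs \<beta>)) \<xi>) * of_nat (mi_fact \<beta>)"
proof -
  have "\<forall>\<beta>. (\<Sum>l\<in>UNIV - {i0}. \<beta> l) = n \<longrightarrow>
     ip (monomial_vec \<beta> \<xi>) (monomial_vec \<beta> \<xi>) * of_nat (fact (mi_abs \<beta>))
       = ip (monomial_vec (topidx i0 (mi_abs \<beta>)) \<xi>) (monomial_vec (topidx i0 (mi_abs \<beta>)) \<xi>) * of_nat (mi_fact \<beta>)" for n
  proof (induction n)
    case 0
    show ?case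
    proof (intro allI impI)
      fix \<beta> :: "'d \<Rightarrow> nat" assume "(\<Sum>l\<in>UNIV - {i0}. \<beta> l) = 0"
      then have z: "\<forall>l. l \<noteq> i0 \<longrightarrow> \<beta> l = 0" by simp
      have ab: "mi_abs \<beta> = \<beta> i0" unfolding mi_abs_def
        using z by (subst sum.remove[of UNIV i0]) auto
      have bt: "topidx i0 (mi_abs \<beta>) = \<beta>" unfolding ab topidx_def using z by auto
      have "mi_fact \<beta> = fact (\<beta> i0)" unfolding mi_fact_def
        using z by (subst prod.remove[of UNIV i0]) auto
      then show "ip (monomial_vec \<beta> \<xi>) (monomial_vec \<beta> \<xi>) * of_nat (fact (mi_abs \<beta>))
       = ip (monomial_vec (topidx i0 (mi_abs \<beta>)) \<xi>) (monomial_vec (topidx i0 (mi_abs \<beta>)) \<xi>) * of_nat (mi_fact \<beta>)"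
        unfolding bt by (simp add: ab)
    qed
  next
    case (Suc n)
    show ?case
    proof (intro allI impI)
      fix \<beta> :: "'d \<Rightarrow> nat" assume sb: "(\<Sum>l\<in>UNIV - {i0}. \<beta> l) = Suc n"
      then obtain j where j: "j \<in> UNIV - {i0}" "\<beta> j \<noteq> 0"
        by (metis nat.distinct(1) sum.neutral)
      then have ij: "i0 \<noteq> j" and bj: "\<beta> j \<ge> 1" by auto
      define \<beta>' where "\<beta>' = \<beta>(i0 := Suc (\<beta> i0), j := \<beta> j - 1)"
      have s1: "(\<Sum>l\<in>UNIV - {i0}. \<beta> l) = \<beta> j + (\<Sum>l\<in>UNIV - {i0} - {j}. \<beta> l)"
        using j by (subst sum.remove[of _ j]) auto
      have s2: "(\<Sum>l\<in>UNIV - {i0}. \<beta>' l) = \<beta>' j + (\<Sum>l\<in>UNIV - {i0} - {j}. \<beta>' l)"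
        using j by (subst sum.remove[of _ j]) auto
      have s3: "(\<Sum>l\<in>UNIV - {i0} - {j}. \<beta>' l) = (\<Sum>l\<in>UNIV - {i0} - {j}. \<beta> l)"
        unfolding \<beta>'_def by (intro sum.cong) auto
      have n': "(\<Sum>l\<in>UNIV - {i0}. \<beta>' l) = n" using sb s1 s2 s3 bj ij unfolding \<beta>'_def by simp
      have abs': "mi_abs \<beta>' = mi_abs \<beta>"
      proof -
        have "(\<Sum>l\<in>UNIV - {i0, j}. \<beta>' l) = (\<Sum>l\<in>UNIV - {i0, j}. \<beta> l)"
          unfolding \<beta>'_def by (intro sum.cong) auto
        then show ?thesis unfolding mi_abs_def sum_split_ij[OF ij] using bj ij unfolding \<beta>'_def by simp
      qed
      have IH: "ip (monomial_vec \<beta>' \<xi>) (monomial_vec \<beta>' \<xi>) * of_nat (fact (mi_abs \<beta>))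
       = ip (monomial_vec (topidx i0 (mi_abs \<beta>)) \<xi>) (monomial_vec (topidx i0 (mi_abs \<beta>)) \<xi>) * of_nat (mi_fact \<beta>')"
        using Suc.IH n' abs' by metis
      have st: "ip (monomial_vec \<beta> \<xi>) (monomial_vec \<beta> \<xi>) * of_nat (mi_fact \<beta>')
       = ip (monomial_vec \<beta>' \<xi>) (monomial_vec \<beta>' \<xi>) * of_nat (mi_fact \<beta>)"
        using step[where \<beta>=\<beta> and \<xi>=\<xi> and i=i0 and j=j, OF Ud ij bj] unfolding \<beta>'_def .
      define Q where "Q = ip (monomial_vec \<beta> \<xi>) (monomial_vec \<beta> \<xi>)"
      define Q' where "Q' = ip (monomial_vec \<beta>' \<xi>) (monomial_vec \<beta>' \<xi>)"
      define T where "T = ip (monomial_vec (topidx i0 (mi_abs \<beta>)) \<xi>) (monomial_vec (topidx i0 (mi_abs \<beta>)) \<xi>)"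
      have "of_nat (mi_fact \<beta>') * (Q * of_nat (fact (mi_abs \<beta>))) = of_nat (mi_fact \<beta>') * (T * of_nat (mi_fact \<beta>))"
      proof -
        have "of_nat (mi_fact \<beta>') * (Q * of_nat (fact (mi_abs \<beta>))) = (Q * of_nat (mi_fact \<beta>')) * of_nat (fact (mi_abs \<beta>))"
          by (simp add: algebra_simps)
        also have "\<dots> = (Q' * of_nat (fact (mi_abs \<beta>))) * of_nat (mi_fact \<beta>)"
          using st unfolding Q_def Q'_def by (simp add: algebra_simps)
        also have "\<dots> = (T * of_nat (mi_fact \<beta>')) * of_nat (mi_fact \<beta>)"
          using IH unfolding Q'_def T_def by simp
        finally show ?thesis by (simp add: algebra_simps)
      qed
      moreover have "(of_nat (mi_fact \<beta>') :: complex) \<noteq> 0" using mi_fact_pos[of \<beta>'] by simp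
      ultimately show "ip (monomial_vec \<beta> \<xi>) (monomial_vec \<beta> \<xi>) * of_nat (fact (mi_abs \<beta>))
       = ip (monomial_vec (topidx i0 (mi_abs \<beta>)) \<xi>) (monomial_vec (topidx i0 (mi_abs \<beta>)) \<xi>) * of_nat (mi_fact \<beta>)"
        unfolding Q_def T_def by (metis mult_left_cancel)
    qed
  qed
  then show ?thesis by blast
qed

end


context full
begin

lemma quad_expand:
  "ip (monomial_vec \<alpha> \<xi>) (monomial_vec \<alpha> \<xi>) =
   (\<Sum>b\<in>UNIV. \<Sum>a\<in>UNIV. \<xi> $ b * cnj (\<xi> $ a) * ip (monomial_vec \<alpha> (axis b 1)) (monomial_vec \<alpha> (axis a 1)))"
proof -
  have fb: "\<And>b. vscale (\<xi> $ b) (monomial_vec \<alpha> (axis b 1)) \<in> H" by (intro vscale_in mon_in)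
  have S: "(\<lambda>z. \<Sum>a\<in>UNIV. vscale (\<xi> $ a) (monomial_vec \<alpha> (axis a 1)) z) \<in> H"
    by (rule sum_in) (auto intro: fb)
  have "ip (monomial_vec \<alpha> \<xi>) (monomial_vec \<alpha> \<xi>)
    = ip (\<lambda>z. \<Sum>b\<in>UNIV. vscale (\<xi> $ b) (monomial_vec \<alpha> (axis b 1)) z) (\<lambda>z. \<Sum>a\<in>UNIV. vscale (\<xi> $ a) (monomial_vec \<alpha> (axis a 1)) z)"
    by (subst (1 2) mon_sum_axis) (rule refl)
  also have "\<dots> = (\<Sum>b\<in>UNIV. ip (vscale (\<xi> $ b) (monomial_vec \<alpha> (axis b 1))) (\<lambda>z. \<Sum>a\<in>UNIV. vscale (\<xi> $ a) (monomial_vec \<alpha> (axis a 1)) z))"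
    by (rule ip_sum1[OF _ _ S]) (auto intro: fb)
  also have "\<dots> = (\<Sum>b\<in>UNIV. \<xi> $ b * (\<Sum>a\<in>UNIV. ip (monomial_vec \<alpha> (axis b 1)) (vscale (\<xi> $ a) (monomial_vec \<alpha> (axis a 1)))))"
    by (intro sum.cong refl) (simp add: ip_scale1 mon_in S ip_sum2 fb sum_distrib_left)
  also have "\<dots> = (\<Sum>b\<in>UNIV. \<Sum>a\<in>UNIV. \<xi> $ b * cnj (\<xi> $ a) * ip (monomial_vec \<alpha> (axis b 1)) (monomial_vec \<alpha> (axis a 1)))"
    by (intro sum.cong refl) (simp add: ip_scale2 mon_in sum_distrib_left algebra_simps)
  finally show ?thesis .
qed

lemma main_result:
  assumes Ud: "Ud_homogeneous H ip"
  shows "\<exists>A :: nat \<Rightarrow> complex ^ 'n ^ 'n. (\<forall>l. posdef_mat (A l)) \<and>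
           (\<forall>\<alpha> \<xi>. ip (monomial_vec \<alpha> \<xi>) (monomial_vec \<alpha> \<xi>)
                 = of_nat (mi_fact \<alpha>) * cinner (A (mi_abs \<alpha>) *v \<xi>) \<xi>)"
proof -
  define i0 where "i0 = (undefined :: 'd)"
  define Sm where "Sm l x y = ip (monomial_vec (topidx i0 l) x) (monomial_vec (topidx i0 l) y)" for l x y
  define A where "A l = ((\<chi> a b. Sm l (axis b 1) (axis a 1) / of_nat (fact l)) :: complex^'n^'n)" for l
  have quad: "cinner (A l *v \<xi>) \<xi> = Sm l \<xi> \<xi> / of_nat (fact l)" for l \<xi>
  proof -
    have "cinner (A l *v \<xi>) \<xi> = (\<Sum>a\<in>UNIV. (\<Sum>b\<in>UNIV. Sm l (axis b 1) (axis a 1) / of_nat (fact l) * \<xi> $ b) * cnj (\<xi> $ a))"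
      unfolding cinner_def A_def matrix_vector_mult_def by simp
    also have "\<dots> = (\<Sum>a\<in>UNIV. \<Sum>b\<in>UNIV. \<xi> $ b * cnj (\<xi> $ a) * Sm l (axis b 1) (axis a 1) / of_nat (fact l))"
      by (intro sum.cong refl) (simp only: sum_distrib_right, intro sum.cong refl, simp)
    also have "\<dots> = (\<Sum>b\<in>UNIV. \<Sum>a\<in>UNIV. \<xi> $ b * cnj (\<xi> $ a) * Sm l (axis b 1) (axis a 1) / of_nat (fact l))"
      by (rule sum.swap)
    also have "\<dots> = Sm l \<xi> \<xi> / of_nat (fact l)"
      unfolding Sm_def quad_expand[of "topidx i0 l" \<xi>] by (simp add: sum_divide_distrib)
    finally show ?thesis .
  qed
  have pd: "posdef_mat (A l)" for l
    unfolding posdef_mat_def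
  proof (intro conjI allI impI)
    fix a b
    have "Sm l (axis b 1) (axis a 1) = cnj (Sm l (axis a 1) (axis b 1))"
      unfolding Sm_def by (rule ip_cnj[OF mon_in mon_in])
    then show "A l $ a $ b = cnj (A l $ b $ a)" unfolding A_def by simp
  next
    fix \<xi> :: "complex^'n" assume ne: "\<xi> \<noteq> 0"
    let ?F = "monomial_vec (topidx i0 l) \<xi>"
    have FH: "?F \<in> H" by (rule mon_in)
    have Fne: "?F \<noteq> (\<lambda>z. 0)" by (rule mon_nonzero[OF ne])
    have im: "Im (ip ?F ?F) = 0" by (rule ip_Im[OF FH])
    have "Re (ip ?F ?F) \<noteq> 0"
    proof
      assume "Re (ip ?F ?F) = 0"
      then have "ip ?F ?F = 0" using im by (simp add: complex_eq_iff)
      then show False using ip_def0[OF FH] Fne by blast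
    qed
    then have re: "Re (ip ?F ?F) > 0" using ip_Re[OF FH] by simp
    show "Im (cinner (A l *v \<xi>) \<xi>) = 0" unfolding quad Sm_def Im_divide_of_nat using im by simp
    show "Re (cinner (A l *v \<xi>) \<xi>) > 0" unfolding quad Sm_def Re_divide_of_nat using re by simp
  qed
  have eq: "ip (monomial_vec \<alpha> \<xi>) (monomial_vec \<alpha> \<xi>) = of_nat (mi_fact \<alpha>) * cinner (A (mi_abs \<alpha>) *v \<xi>) \<xi>" for \<alpha> \<xi>
  proof -
    have c: "ip (monomial_vec \<alpha> \<xi>) (monomial_vec \<alpha> \<xi>) * of_nat (fact (mi_abs \<alpha>)) = Sm (mi_abs \<alpha>) \<xi> \<xi> * of_nat (mi_fact \<alpha>)"
      unfolding Sm_def by (rule chain[OF Ud])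
    have nz: "(of_nat (fact (mi_abs \<alpha>)) :: complex) \<noteq> 0" by (metis of_nat_eq_0_iff fact_nonzero)
    show ?thesis unfolding quad using c nz by (simp add: field_simps)
  qed
  show ?thesis using pd eq by blast
qed

end

theorem theorem4p10:
  fixes H :: "(complex ^ 'd::finite \<Rightarrow> complex ^ 'n::finite) set"
    and ip :: "(complex ^ 'd \<Rightarrow> complex ^ 'n) \<Rightarrow> (complex ^ 'd \<Rightarrow> complex ^ 'n) \<Rightarrow> complex"
  assumes "rkhs_hol H ip"
    and "polys_dense H ip"
    and "\<And>\<alpha> \<beta> \<xi> \<eta>. \<alpha> \<noteq> \<beta> \<Longrightarrow> ip (monomial_vec \<alpha> \<xi>) (monomial_vec \<beta> \<eta>) = 0"
    and "mult_bounded H ip"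
    and "Ud_homogeneous H ip"
  shows "\<exists>A :: nat \<Rightarrow> complex ^ 'n ^ 'n. (\<forall>l. posdef_mat (A l)) \<and>
           (\<forall>\<alpha> \<xi>. ip (monomial_vec \<alpha> \<xi>) (monomial_vec \<alpha> \<xi>)
                 = of_nat (mi_fact \<alpha>) * cinner (A (mi_abs \<alpha>) *v \<xi>) \<xi>)"
proof -
  have hh: "hilbert_hol H ip" using assms(1) unfolding rkhs_hol_def by blast
  interpret full H ip
    by (rule full.intro[OF hilb.intro[OF hh] full_axioms.intro[OF assms(1) assms(2) assms(3) assms(4)]])
  show ?thesis by (rule main_result[OF assms(5)])
qed


end
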